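(* Assume Setting (S) and, in addition, that $|C_n|\le M|d_nD_n|$ for all $n\in\mathbb{N}$. Then for every $\varepsilon\in(0,1)$ and every $T>\frac{2\pi}{\gamma\sqrt{1-\varepsilon}}$ there exist $n_0=n_0(\varepsilon)\in\mathbb{N}$, independent of $T$ and of the coefficients $C_n,D_n,R_n$, and a constant $c(T,\varepsilon)>0$ such that $$\int_0^\infty k(t)\big(|u_1^{n_0}(t)|^2+|u_2^{n_0}(t)|^2\big)dt\ \ge\ c(T,\varepsilon)\sum_{n=n_0}^\infty\big(|C_n|^2+|d_nD_n|^2\big).$$
   Context: Setting (S): $(\omega_n),(\zeta_n),(C_n),(D_n),(c_n),(d_n)$ ($n\ge1$) are complex sequences and $(r_n),(R_n)$ are real sequences. There are constants $\gamma>0$, $\alpha>0$, $\chi<0$, $n'\in\mathbb{N}$, $\mu>0$, $\nu>1/2$, $M>0$, $0<c_1\le c_2$ such that: (H1) $\liminf_{n\to\infty}(\operatorname{Re}\omega_{n+1}-\operatorname{Re}\omega_n)=\liminf_{n\to\infty}(\operatorname{Re}\zeta_{n+1}-\operatorname{Re}\zeta_n)=\gamma$; (H2) $\operatorname{Im}\omega_n\to\alpha$, $r_n\to\chi$, $\operatorname{Im}\zeta_n\to0$; (H3) $\omega_n\ne0$, $\zeta_n\neq0$, $c_1|\zeta_n|\le|d_n|\le c_2|\zeta_n|$ and $|c_n|\le M/|\omega_n|$ for all $n$; (H4) $|R_n|\le\mu n^{-\nu}(|C_n|^2+|d_nD_n|^2)^{1/2}$ for $n\ge n'$ and $|R_n|\le\mu(|C_n|^2+|d_nD_n|^2)^{1/2}$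 for $n\le n'$; (H5) $\sum_n(|C_n|^2+|d_nD_n|^2)<\infty$. For $n_0\in\mathbb{N}$ and $t\in\mathbb{R}$, $u_1^{n_0}(t)=\sum_{n\ge n_0}\big(C_ne^{i\omega_nt}+\overline{C_n}e^{-i\overline{\omega_n}t}+R_ne^{r_nt}+D_ne^{i\zeta_nt}+\overline{D_n}e^{-i\overline{\zeta_n}t}\big)$, $u_2^{n_0}(t)=\sum_{n\ge n_0}\big(d_nD_ne^{i\zeta_nt}+\overline{d_nD_n}e^{-i\overline{\zeta_n}t}+c_nC_ne^{i\omega_nt}+\overline{c_nC_n}e^{-i\overline{\omega_n}t}\big)$. For $T>0$, $k(t):=\sin(\pi t/T)$ for $t\in[0,T]$ and $k(t):=0$ otherwise. *)

theory Defs
  imports "HOL-Analysis.Analysis"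
begin

definition kweight :: "real \<Rightarrow> real \<Rightarrow> real" where
  "kweight T t = (if 0 \<le> t \<and> t \<le> T then sin (pi * t / T) else 0)"

definition u1_partial ::
  "(nat \<Rightarrow> complex) \<Rightarrow> (nat \<Rightarrow> complex) \<Rightarrow> (nat \<Rightarrow> real) \<Rightarrow>
   (nat \<Rightarrow> complex) \<Rightarrow> (nat \<Rightarrow> complex) \<Rightarrow> (nat \<Rightarrow> real) \<Rightarrow>
   nat \<Rightarrow> nat \<Rightarrow> real \<Rightarrow> complex" where
  "u1_partial \<omega> \<zeta> r C D R n0 N t =
     (\<Sum>n\<in>{n0..N}. C n * exp (\<i> * \<omega> n * of_real t)
        + cnj (C n) * exp (- \<i> * cnj (\<omega> n) * of_real t)
        + of_real (R n * exp (r n * t))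
        + D n * exp (\<i> * \<zeta> n * of_real t)
        + cnj (D n) * exp (- \<i> * cnj (\<zeta> n) * of_real t))"

definition u2_partial ::
  "(nat \<Rightarrow> complex) \<Rightarrow> (nat \<Rightarrow> complex) \<Rightarrow> (nat \<Rightarrow> complex) \<Rightarrow> (nat \<Rightarrow> complex) \<Rightarrow>
   (nat \<Rightarrow> complex) \<Rightarrow> (nat \<Rightarrow> complex) \<Rightarrow>
   nat \<Rightarrow> nat \<Rightarrow> real \<Rightarrow> complex" where
  "u2_partial \<omega> \<zeta> c d C D n0 N t =
     (\<Sum>n\<in>{n0..N}. d n * D n * exp (\<i> * \<zeta> n * of_real t)
        + cnj (d n * D n) * exp (- \<i> * cnj (\<zeta> n) * of_real t)
        + c n * C n * exp (\<i> * \<omega> n * of_real t)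
        + cnj (c n * C n) * exp (- \<i> * cnj (\<omega> n) * of_real t))"

text \<open>The weighted energy integral of the N-th partial sums; the integral of
  k (|u_1^{n0}|^2 + |u_2^{n0}|^2) is understood as the limit N \<rightarrow> \<infinity> of these
  (the series converge in L^2(0,T)).\<close>
definition energy_partial ::
  "(nat \<Rightarrow> complex) \<Rightarrow> (nat \<Rightarrow> complex) \<Rightarrow> (nat \<Rightarrow> complex) \<Rightarrow> (nat \<Rightarrow> complex) \<Rightarrow>
   (nat \<Rightarrow> real) \<Rightarrow> (nat \<Rightarrow> complex) \<Rightarrow> (nat \<Rightarrow> complex) \<Rightarrow> (nat \<Rightarrow> real) \<Rightarrow>
   real \<Rightarrow> nat \<Rightarrow> nat \<Rightarrow> real" where
  "energy_partial \<omega> \<zeta> c d r C D R T n0 N =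
     integral {0..} (\<lambda>t. kweight T t *
        ((cmod (u1_partial \<omega> \<zeta> r C D R n0 N t))\<^sup>2
         + (cmod (u2_partial \<omega> \<zeta> c d C D n0 N t))\<^sup>2))"

end

theory Submission
  imports Defs
begin


definition Qf :: "real \<Rightarrow> (real \<Rightarrow> complex) \<Rightarrow> real" where
  "Qf T f = integral {0..T} (\<lambda>t. sin (pi*t/T) * (cmod (f t))\<^sup>2)"

definition Kz :: "real \<Rightarrow> complex \<Rightarrow> complex" where
  "Kz T z = integral {0..T} (\<lambda>t. of_real (sin (pi*t/T)) * exp (\<i> * z * of_real t))"

lemma sin_w_nonneg: "T > 0 \<Longrightarrow> t \<in> {0..T} \<Longrightarrow> 0 \<le> sin (pi*t/T)"
  by (rule sin_ge_zero) (auto simp: field_simps)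

lemma Q_int: "T > 0 \<Longrightarrow> continuous_on {0..T} f \<Longrightarrow> (\<lambda>t. sin (pi*t/T) * (cmod (f t))\<^sup>2) integrable_on {0..T}"
  by (intro integrable_continuous_interval continuous_intros) auto

lemma Q_nonneg: "T > 0 \<Longrightarrow> continuous_on {0..T} f \<Longrightarrow> 0 \<le> Qf T f"
  unfolding Qf_def by (rule integral_nonneg[OF Q_int]) (auto intro!: mult_nonneg_nonneg sin_w_nonneg)

lemma Q_le2:
  assumes "T > 0" "continuous_on {0..T} f" "continuous_on {0..T} g" "continuous_on {0..T} h"
    and "\<And>t. t \<in> {0..T} \<Longrightarrow> (cmod (f t))\<^sup>2 \<le> a * (cmod (g t))\<^sup>2 + b * (cmod (h t))\<^sup>2"
  shows "Qf T f \<le> a * Qf T g + b * Qf T h"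
proof -
  have "Qf T f \<le> integral {0..T} (\<lambda>t. a * (sin (pi*t/T) * (cmod (g t))\<^sup>2) + b * (sin (pi*t/T) * (cmod (h t))\<^sup>2))"
    unfolding Qf_def
  proof (rule integral_le[OF Q_int[OF assms(1,2)]])
    show "(\<lambda>t. a * (sin (pi*t/T) * (cmod (g t))\<^sup>2) + b * (sin (pi*t/T) * (cmod (h t))\<^sup>2)) integrable_on {0..T}"
      using assms by (intro integrable_add integrable_on_mult_right Q_int) auto
    fix t assume t: "t \<in> {0..T}"
    have "sin (pi*t/T) * (cmod (f t))\<^sup>2 \<le> sin (pi*t/T) * (a * (cmod (g t))\<^sup>2 + b * (cmod (h t))\<^sup>2)"
      by (rule mult_left_mono[OF assms(5)[OF t] sin_w_nonneg[OF assms(1) t]])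
    then show "sin (pi*t/T) * (cmod (f t))\<^sup>2 \<le> a * (sin (pi*t/T) * (cmod (g t))\<^sup>2) + b * (sin (pi*t/T) * (cmod (h t))\<^sup>2)"
      by (simp add: algebra_simps)
  qed
  also have "\<dots> = a * Qf T g + b * Qf T h"
    unfolding Qf_def using assms
    by (subst integral_add) (auto intro!: integrable_on_mult_right Q_int)
  finally show ?thesis .
qed

lemma Q_le1:
  assumes "T > 0" "continuous_on {0..T} f" "continuous_on {0..T} g"
    and "\<And>t. t \<in> {0..T} \<Longrightarrow> (cmod (f t))\<^sup>2 \<le> a * (cmod (g t))\<^sup>2"
  shows "Qf T f \<le> a * Qf T g"
  using Q_le2[OF assms(1,2,3,3), of a 0] assms(4) by simp

lemma Q_le3:
  assumes "T > 0" "continuous_on {0..T} f" "continuous_on {0..T} g" "continuous_on {0..T} h"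
     "continuous_on {0..T} k"
    and "\<And>t. t \<in> {0..T} \<Longrightarrow> (cmod (f t))\<^sup>2 \<le> a * (cmod (g t))\<^sup>2 + b * (cmod (h t))\<^sup>2 + c * (cmod (k t))\<^sup>2"
  shows "Qf T f \<le> a * Qf T g + b * Qf T h + c * Qf T k"
proof -
  have "Qf T f \<le> integral {0..T} (\<lambda>t. a * (sin (pi*t/T) * (cmod (g t))\<^sup>2) + b * (sin (pi*t/T) * (cmod (h t))\<^sup>2) + c * (sin (pi*t/T) * (cmod (k t))\<^sup>2))"
    unfolding Qf_def
  proof (rule integral_le[OF Q_int[OF assms(1,2)]])
    show "(\<lambda>t. a * (sin (pi*t/T) * (cmod (g t))\<^sup>2) + b * (sin (pi*t/T) * (cmod (h t))\<^sup>2) + c * (sin (pi*t/T) * (cmod (k t))\<^sup>2)) integrable_on {0..T}"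
      using assms by (intro integrable_add integrable_on_mult_right Q_int) auto
    fix t assume t: "t \<in> {0..T}"
    have "sin (pi*t/T) * (cmod (f t))\<^sup>2 \<le> sin (pi*t/T) * (a * (cmod (g t))\<^sup>2 + b * (cmod (h t))\<^sup>2 + c * (cmod (k t))\<^sup>2)"
      by (rule mult_left_mono[OF assms(6)[OF t] sin_w_nonneg[OF assms(1) t]])
    then show "sin (pi*t/T) * (cmod (f t))\<^sup>2 \<le> a * (sin (pi*t/T) * (cmod (g t))\<^sup>2) + b * (sin (pi*t/T) * (cmod (h t))\<^sup>2) + c * (sin (pi*t/T) * (cmod (k t))\<^sup>2)"
      by (simp add: algebra_simps)
  qed
  also have "\<dots> = a * Qf T g + b * Qf T h + c * Qf T k"
    unfolding Qf_def using assms
    by (subst integral_add integral_add; auto intro!: integrable_on_mult_right Q_int integrable_add)+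
  finally show ?thesis .
qed

lemma energy_eq:
  assumes "T > 0"
  shows "energy_partial \<omega> \<zeta> c d r C D R T n0 N =
     Qf T (u1_partial \<omega> \<zeta> r C D R n0 N) + Qf T (u2_partial \<omega> \<zeta> c d C D n0 N)"
proof -
  let ?X = "\<lambda>t. (cmod (u1_partial \<omega> \<zeta> r C D R n0 N t))\<^sup>2 + (cmod (u2_partial \<omega> \<zeta> c d C D n0 N t))\<^sup>2"
  have c1: "continuous_on {0..T} (u1_partial \<omega> \<zeta> r C D R n0 N)"
    unfolding u1_partial_def by (intro continuous_intros)
  have c2: "continuous_on {0..T} (u2_partial \<omega> \<zeta> c d C D n0 N)"
    unfolding u2_partial_def by (intro continuous_intros)
  have i: "((\<lambda>t. sin (pi*t/T) * ?X t) has_integral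
      (Qf T (u1_partial \<omega> \<zeta> r C D R n0 N) + Qf T (u2_partial \<omega> \<zeta> c d C D n0 N))) {0..T}"
    unfolding Qf_def distrib_left
    by (intro has_integral_add integrable_integral Q_int c1 c2 assms)
  have "((\<lambda>t. if t \<in> {0..T} then sin (pi*t/T) * ?X t else 0) has_integral
      (Qf T (u1_partial \<omega> \<zeta> r C D R n0 N) + Qf T (u2_partial \<omega> \<zeta> c d C D n0 N))) {0..}"
    using i by (subst has_integral_restrict) auto
  moreover have "(\<lambda>t. if t \<in> {0..T} then sin (pi*t/T) * ?X t else 0) = (\<lambda>t. kweight T t * ?X t)"
    by (auto simp: kweight_def fun_eq_iff)
  ultimately show ?thesis unfolding energy_partial_def by (simp add: integral_unique)
qed



lemma K_int: "T > 0 \<Longrightarrow> ((\<lambda>t. of_real (sin (pi*t/T)) * exp (\<i> * z * of_real t)) has_integral Kz T z) {0..T}"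
  unfolding Kz_def
  by (intro integrable_integral integrable_continuous_interval continuous_intros) auto

lemma gram:
  assumes "T > 0" "finite I" "finite J"
  shows "((\<lambda>t. of_real (sin (pi*t/T)) * ((\<Sum>i\<in>I. a i * exp (\<i> * l i * of_real t)) *
            (\<Sum>j\<in>J. c j * exp (\<i> * m j * of_real t)))) has_integral
          (\<Sum>i\<in>I. \<Sum>j\<in>J. a i * c j * Kz T (l i + m j))) {0..T}"
proof -
  have h: "((\<lambda>t. \<Sum>i\<in>I. \<Sum>j\<in>J. a i * c j * (of_real (sin (pi*t/T)) * exp (\<i> * (l i + m j) * of_real t))) has_integral
          (\<Sum>i\<in>I. \<Sum>j\<in>J. a i * c j * Kz T (l i + m j))) {0..T}"
    using assms by (intro has_integral_sum has_integral_mult_right K_int) auto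
  show ?thesis
  proof (rule has_integral_eq[OF _ h])
    fix t :: real
    show "(\<Sum>i\<in>I. \<Sum>j\<in>J. a i * c j * (of_real (sin (pi*t/T)) * exp (\<i> * (l i + m j) * of_real t))) =
       of_real (sin (pi*t/T)) * ((\<Sum>i\<in>I. a i * exp (\<i> * l i * of_real t)) *
            (\<Sum>j\<in>J. c j * exp (\<i> * m j * of_real t)))"
    proof -
      have "of_real (sin (pi*t/T)) * ((\<Sum>i\<in>I. a i * exp (\<i> * l i * of_real t)) *
            (\<Sum>j\<in>J. c j * exp (\<i> * m j * of_real t))) = (\<Sum>i\<in>I. \<Sum>j\<in>J. of_real (sin (pi*t/T)) *
             ((a i * exp (\<i> * l i * of_real t)) * (c j * exp (\<i> * m j * of_real t))))"
        by (subst sum_product) (simp only: sum_distrib_left)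
      also have "\<dots> = (\<Sum>i\<in>I. \<Sum>j\<in>J. a i * c j * (of_real (sin (pi*t/T)) * exp (\<i> * (l i + m j) * of_real t)))"
        by (intro sum.cong refl) (simp add: exp_add[symmetric] algebra_simps)
      finally show ?thesis by simp
    qed
  qed
qed

lemma Q_gram:
  assumes "T > 0" "finite I"
  shows "Qf T (\<lambda>t. \<Sum>i\<in>I. a i * exp (\<i> * l i * of_real t)) =
    Re (\<Sum>i\<in>I. \<Sum>j\<in>I. a i * cnj (a j) * Kz T (l i - cnj (l j)))"
proof -
  let ?f = "\<lambda>t::real. \<Sum>i\<in>I. a i * exp (\<i> * l i * of_real t)"
  have cf: "cnj (?f t) = (\<Sum>j\<in>I. cnj (a j) * exp (\<i> * (- cnj (l j)) * of_real t))" for t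
    by (simp add: exp_cnj)
  have g: "((\<lambda>t. of_real (sin (pi*t/T)) * (?f t * cnj (?f t))) has_integral
          (\<Sum>i\<in>I. \<Sum>j\<in>I. a i * cnj (a j) * Kz T (l i - cnj (l j)))) {0..T}"
    unfolding cf using gram[OF assms assms(2), of a l "\<lambda>j. cnj (a j)" "\<lambda>j. - cnj (l j)"] by simp
  have "((\<lambda>t. sin (pi*t/T) * (cmod (?f t))\<^sup>2) has_integral
          Re (\<Sum>i\<in>I. \<Sum>j\<in>I. a i * cnj (a j) * Kz T (l i - cnj (l j)))) {0..T}"
  proof (rule has_integral_eq[OF _ has_integral_Re[OF g]])
    fix t
    show "Re (of_real (sin (pi*t/T)) * (?f t * cnj (?f t))) = sin (pi*t/T) * (cmod (?f t))\<^sup>2"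
      by (subst complex_norm_square[symmetric]) simp
  qed
  then show ?thesis unfolding Qf_def by (rule integral_unique)
qed



lemma K_closed:
  assumes T: "T > 0" and nz: "z\<^sup>2 \<noteq> (of_real (pi/T))\<^sup>2"
  shows "Kz T z = of_real (pi/T) * (1 + exp (\<i> * z * of_real T)) / ((of_real (pi/T))\<^sup>2 - z\<^sup>2)"
proof -
  define B :: complex where "B = of_real (pi/T)"
  have Dnz: "B\<^sup>2 - z\<^sup>2 \<noteq> 0" using nz unfolding B_def by simp
  define G where "G w = exp (\<i> * z * w) * (\<i> * z * sin (B*w) - B*cos (B*w)) / (B\<^sup>2 - z\<^sup>2)" for w
  have dG: "(G has_field_derivative (sin (B*w) * exp (\<i> * z * w))) (at w)" for w
  proof -
    have "(G has_field_derivative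
       ((exp (\<i> * z * w) * (\<i>*z)) * (\<i> * z * sin (B*w) - B*cos (B*w)) + exp (\<i> * z * w) * (\<i> * z * (cos (B*w) * B) - B*(- sin (B*w) * B))) / (B\<^sup>2 - z\<^sup>2)) (at w)"
      unfolding G_def using Dnz by (auto intro!: derivative_eq_intros)
    moreover have "((exp (\<i> * z * w) * (\<i>*z)) * (\<i> * z * sin (B*w) - B*cos (B*w)) + exp (\<i> * z * w) * (\<i> * z * (cos (B*w) * B) - B*(- sin (B*w) * B))) / (B\<^sup>2 - z\<^sup>2)
        = sin (B*w) * exp (\<i> * z * w)"
      using Dnz by (simp add: field_simps power2_eq_square)
    ultimately show ?thesis by simp
  qed
  have "((\<lambda>t. of_real (sin (pi*t/T)) * exp (\<i> * z * of_real t)) has_integral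
        (G (of_real T) - G (of_real 0))) {0..T}"
  proof (rule has_integral_eq[OF _ fundamental_theorem_of_calculus[of 0 T "\<lambda>t. G (of_real t)"]])
    show "0 \<le> T" using T by simp
    fix t :: real
    show "((\<lambda>t. G (of_real t)) has_vector_derivative (sin (B * of_real t) * exp (\<i> * z * of_real t))) (at t within {0..T})"
      by (rule has_vector_derivative_real_field[OF dG])
    have "B * of_real t = of_real (pi*t/T)" unfolding B_def by simp
    then have "sin (B * of_real t) = of_real (sin (pi*t/T))"
      by (metis sin_of_real)
    then show "sin (B * of_real t) * exp (\<i> * z * of_real t) = of_real (sin (pi*t/T)) * exp (\<i> * z * of_real t)"
      by simp
  qed
  moreover have "G (of_real T) - G (of_real 0) = B * (1 + exp (\<i> * z * of_real T)) / (B\<^sup>2 - z\<^sup>2)"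
  proof -
    have "B * of_real T = of_real pi" unfolding B_def using T by simp
    then have "G (of_real T) = exp (\<i> * z * of_real T) * B / (B\<^sup>2 - z\<^sup>2)"
      unfolding G_def by (simp add: sin_of_real cos_of_real)
    moreover have "G (of_real 0) = - B / (B\<^sup>2 - z\<^sup>2)" unfolding G_def by simp
    ultimately show ?thesis using Dnz by (simp add: field_simps)
  qed
  ultimately show ?thesis unfolding Kz_def B_def by (simp add: integral_unique)
qed



lemma K_offbound:
  assumes T: "T > 0" and x: "\<bar>Re z\<bar> > pi/T"
  shows "cmod (Kz T z) \<le> (pi/T) * (1 + exp (\<bar>Im z\<bar> * T)) / ((Re z)\<^sup>2 - (pi/T)\<^sup>2)"
proof -
  define b where "b = pi/T"
  have b: "b > 0" unfolding b_def using T by simp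
  have xb: "\<bar>Re z\<bar> > b" using x b_def by simp
  have pos: "(Re z)\<^sup>2 - b\<^sup>2 > 0"
  proof -
    have "b\<^sup>2 < \<bar>Re z\<bar>\<^sup>2" using xb b by (intro power_strict_mono) auto
    then show ?thesis by simp
  qed
  have le: "(Re z)\<^sup>2 - b\<^sup>2 \<le> cmod ((of_real b)\<^sup>2 - z\<^sup>2)"
  proof -
    have "(of_real b)\<^sup>2 - z\<^sup>2 = (of_real b - z) * (of_real b + z)" by (simp add: power2_eq_square algebra_simps)
    then have "cmod ((of_real b)\<^sup>2 - z\<^sup>2) = cmod (of_real b - z) * cmod (of_real b + z)" by (simp add: norm_mult)
    moreover have "\<bar>b - Re z\<bar> \<le> cmod (of_real b - z)" using abs_Re_le_cmod[of "of_real b - z"] by simp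
    moreover have "\<bar>b + Re z\<bar> \<le> cmod (of_real b + z)" using abs_Re_le_cmod[of "of_real b + z"] by simp
    ultimately have "\<bar>b - Re z\<bar> * \<bar>b + Re z\<bar> \<le> cmod ((of_real b)\<^sup>2 - z\<^sup>2)"
      by (simp add: mult_mono)
    moreover have "\<bar>b - Re z\<bar> * \<bar>b + Re z\<bar> = \<bar>b\<^sup>2 - (Re z)\<^sup>2\<bar>"
      by (simp add: abs_mult[symmetric] power2_eq_square algebra_simps)
    ultimately show ?thesis using pos by simp
  qed
  have nz: "z\<^sup>2 \<noteq> (of_real b)\<^sup>2" using le pos by auto
  have num: "cmod (1 + exp (\<i> * z * of_real T)) \<le> 1 + exp (\<bar>Im z\<bar> * T)"
  proof -
    have "cmod (1 + exp (\<i> * z * of_real T)) \<le> 1 + cmod (exp (\<i> * z * of_real T))"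
      using norm_triangle_ineq[of 1 "exp (\<i> * z * of_real T)"] by simp
    moreover have "cmod (exp (\<i> * z * of_real T)) = exp (- Im z * T)" by simp
    moreover have "exp (- Im z * T) \<le> exp (\<bar>Im z\<bar> * T)"
      using mult_right_mono[of "- Im z" "\<bar>Im z\<bar>" T] T by simp
    ultimately show ?thesis by linarith
  qed
  have "cmod (Kz T z) = b * cmod (1 + exp (\<i> * z * of_real T)) / cmod ((of_real b)\<^sup>2 - z\<^sup>2)"
    using K_closed[OF T nz[unfolded b_def]] b T unfolding b_def by (simp add: norm_mult norm_divide)
  also have "\<dots> \<le> b * (1 + exp (\<bar>Im z\<bar> * T)) / ((Re z)\<^sup>2 - b\<^sup>2)"
    using num le pos b by (intro frac_le mult_left_mono) auto
  finally show ?thesis unfolding b_def .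
qed

lemma K_zero: "T > 0 \<Longrightarrow> Kz T 0 = of_real (2*T/pi)"
  using K_closed[of T 0] by (simp add: field_simps power2_eq_square)

lemma sin_int: "T > 0 \<Longrightarrow> ((\<lambda>t. sin (pi*t/T)) has_integral (2*T/pi)) {0..T}"
  using has_integral_Re[OF K_int[of T 0]] K_zero[of T] by simp

lemma K_diag:
  assumes T: "T > 0" and z: "Re z = 0"
  shows "Re (Kz T z) \<ge> exp (- \<bar>Im z\<bar> * T) * (2*T/pi)"
proof -
  have zz: "z = \<i> * of_real (Im z)" using z by (simp add: complex_eq_iff)
  have "((\<lambda>t. exp (- \<bar>Im z\<bar> * T) * sin (pi*t/T)) has_integral (exp (- \<bar>Im z\<bar> * T) * (2*T/pi))) {0..T}"
    by (intro has_integral_mult_right sin_int T)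
  then show ?thesis
  proof (rule has_integral_le[OF _ has_integral_Re[OF K_int[OF T, of z]]])
    fix t assume t: "t \<in> {0..T}"
    have e: "\<i> * z * of_real t = of_real (- Im z * t)" by (subst zz) (simp add: algebra_simps)
    have "exp (- \<bar>Im z\<bar> * T) \<le> exp (- Im z * t)"
      using t T by (auto simp: abs_if mult_mono) 
    then have "exp (- \<bar>Im z\<bar> * T) * sin (pi * t / T) \<le> exp (- Im z * t) * sin (pi * t / T)"
      using sin_w_nonneg[OF T t] by (rule mult_right_mono)
    then show "exp (- \<bar>Im z\<bar> * T) * sin (pi * t / T) \<le> Re (complex_of_real (sin (pi * t / T)) * exp (\<i> * z * complex_of_real t))"
      unfolding e exp_of_real by (simp add: mult.commute)
  qed
qed

lemma K_norm:
  assumes T: "T > 0" and H: "\<bar>Im z\<bar> \<le> H"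
  shows "cmod (Kz T z) \<le> T * exp (H * T)"
proof -
  have "\<And>x. x \<in> {0..T} - {} \<Longrightarrow> cmod (of_real (sin (pi*x/T)) * exp (\<i> * z * of_real x)) \<le> exp (H*T)"
  proof -
    fix t assume t: "t \<in> {0..T} - {}"
    have "cmod (exp (\<i> * z * of_real t)) = exp (- Im z * t)" by simp
    also have "\<dots> \<le> exp (H * T)"
    proof -
      have "- Im z * t \<le> \<bar>Im z\<bar> * t" using t by (intro mult_right_mono) auto
      also have "\<dots> \<le> H * T" using t H by (intro mult_mono) auto
      finally show ?thesis by simp
    qed
    finally have "cmod (exp (\<i> * z * of_real t)) \<le> exp (H*T)" .
    moreover have "\<bar>sin (pi*t/T)\<bar> \<le> 1" by simp
    ultimately show "cmod (of_real (sin (pi*t/T)) * exp (\<i> * z * of_real t)) \<le> exp (H*T)"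
      unfolding norm_mult norm_of_real using mult_mono[of "\<bar>sin (pi*t/T)\<bar>" 1 "cmod (exp (\<i> * z * of_real t))" "exp (H*T)"] by simp
  qed
  from has_integral_bound_real[OF _ _ K_int[OF T] this, of "{}"] show ?thesis using T by (simp add: mult.commute)
qed



lemma schur:
  fixes G :: "nat \<Rightarrow> nat \<Rightarrow> complex"
  assumes fin: "finite I"
    and GB: "\<And>i j. i \<in> I \<Longrightarrow> j \<in> I \<Longrightarrow> cmod (G i j) \<le> B i j"
    and sym: "\<And>i j. i \<in> I \<Longrightarrow> j \<in> I \<Longrightarrow> B i j = B j i"
    and rows: "\<And>i. i \<in> I \<Longrightarrow> (\<Sum>j\<in>I. B i j) \<le> S"
  shows "cmod (\<Sum>i\<in>I. \<Sum>j\<in>I. a i * c j * G i j) \<le> S/2 * ((\<Sum>i\<in>I. (cmod (a i))\<^sup>2) + (\<Sum>i\<in>I. (cmod (c i))\<^sup>2))"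
proof -
  have B0: "i \<in> I \<Longrightarrow> j \<in> I \<Longrightarrow> 0 \<le> B i j" for i j using GB[of i j] norm_ge_zero[of "G i j"] by linarith
  have "cmod (\<Sum>i\<in>I. \<Sum>j\<in>I. a i * c j * G i j) \<le> (\<Sum>i\<in>I. \<Sum>j\<in>I. cmod (a i * c j * G i j))"
    by (rule order_trans[OF norm_sum sum_mono[OF norm_sum]])
  also have "\<dots> \<le> (\<Sum>i\<in>I. \<Sum>j\<in>I. ((cmod (a i))\<^sup>2/2 + (cmod (c j))\<^sup>2/2) * B i j)"
  proof (intro sum_mono)
    fix i j assume ij: "i \<in> I" "j \<in> I"
    have "cmod (a i * c j * G i j) = (cmod (a i) * cmod (c j)) * cmod (G i j)" by (simp add: norm_mult)
    also have "\<dots> \<le> ((cmod (a i))\<^sup>2/2 + (cmod (c j))\<^sup>2/2) * B i j"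
    proof (rule mult_mono[OF _ GB[OF ij]])
      have "0 \<le> (cmod (a i) - cmod (c j))\<^sup>2" by simp
      then show "cmod (a i) * cmod (c j) \<le> (cmod (a i))\<^sup>2/2 + (cmod (c j))\<^sup>2/2"
        by (simp add: power2_eq_square algebra_simps)
    qed auto
    finally show "cmod (a i * c j * G i j) \<le> ((cmod (a i))\<^sup>2/2 + (cmod (c j))\<^sup>2/2) * B i j" .
  qed
  also have "\<dots> = (\<Sum>i\<in>I. (cmod (a i))\<^sup>2/2 * (\<Sum>j\<in>I. B i j)) + (\<Sum>j\<in>I. (cmod (c j))\<^sup>2/2 * (\<Sum>i\<in>I. B i j))"
  proof -
    have "(\<Sum>i\<in>I. \<Sum>j\<in>I. ((cmod (a i))\<^sup>2/2 + (cmod (c j))\<^sup>2/2) * B i j) =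
      (\<Sum>i\<in>I. \<Sum>j\<in>I. (cmod (a i))\<^sup>2/2 * B i j) + (\<Sum>i\<in>I. \<Sum>j\<in>I. (cmod (c j))\<^sup>2/2 * B i j)"
      by (simp only: distrib_right sum.distrib)
    also have "(\<Sum>i\<in>I. \<Sum>j\<in>I. (cmod (c j))\<^sup>2/2 * B i j) = (\<Sum>j\<in>I. \<Sum>i\<in>I. (cmod (c j))\<^sup>2/2 * B i j)"
      by (rule sum.swap)
    finally show ?thesis by (simp only: sum_distrib_left)
  qed
  also have "\<dots> = (\<Sum>i\<in>I. (cmod (a i))\<^sup>2/2 * (\<Sum>j\<in>I. B i j)) + (\<Sum>j\<in>I. (cmod (c j))\<^sup>2/2 * (\<Sum>i\<in>I. B j i))"
    using sym by (intro arg_cong2[where f="(+)"] refl sum.cong) auto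
  also have "\<dots> \<le> (\<Sum>i\<in>I. (cmod (a i))\<^sup>2/2 * S) + (\<Sum>j\<in>I. (cmod (c j))\<^sup>2/2 * S)"
    using rows by (intro add_mono sum_mono mult_left_mono) auto
  also have "\<dots> = S/2 * ((\<Sum>i\<in>I. (cmod (a i))\<^sup>2) + (\<Sum>i\<in>I. (cmod (c i))\<^sup>2))"
    by (simp add: sum_distrib_left sum_distrib_right algebra_simps sum.distrib)
  finally show ?thesis .
qed

lemma sum_split_diag:
  assumes "finite I" "i \<in> I"
  shows "(\<Sum>j\<in>I. f j) = f i + (\<Sum>j\<in>I. if j = i then 0 else f j)"
proof -
  have "(\<Sum>j\<in>I. f j) = f i + (\<Sum>j\<in>I-{i}. f j)" using assms by (simp add: sum.remove)
  moreover have "(\<Sum>j\<in>I. if j = i then 0 else f j) = (\<Sum>j\<in>I-{i}. f j)"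
    using assms by (simp add: sum.If_cases Int_absorb1 Diff_eq)
  ultimately show ?thesis by simp
qed

lemma sep:
  assumes gap: "\<And>n. n \<ge> p \<Longrightarrow> x (Suc n) - x n \<ge> g"
    and "p \<le> i" "i \<le> j"
  shows "x j - x i \<ge> g * (real j - real i)"
  using assms(3)
proof (induction j rule: dec_induct)
  case base then show ?case by simp
next
  case (step j)
  have "x (Suc j) - x j \<ge> g" using gap step(1) assms(2) by simp
  with step(3) show ?case by (simp add: algebra_simps)
qed

lemma tele:
  assumes "P \<ge> 1"
  shows "(\<Sum>m\<in>{P..<P+k}. 1 / (4 * (real m)\<^sup>2 - 1)) = 1 / (2 * (2 * real P - 1)) - 1 / (2 * (2 * real (P + k) - 1))"
proof (induction k)
  case 0 then show ?case by simp
next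
  case (Suc k)
  define u where "u = 2 * real (P + k) - 1"
  have a: "u > 0" using assms unfolding u_def by simp
  have e1: "4 * (real (P+k))\<^sup>2 - 1 = u * (u + 2)" unfolding u_def
    by (simp add: power2_eq_square algebra_simps)
  have e2: "2 * real (P + Suc k) - 1 = u + 2" unfolding u_def by simp
  have e3: "1 / (u * (u + 2)) = 1 / (2 * u) - 1 / (2 * (u + 2))"
  proof -
    have "u + 2 > 0" using a by simp
    then show ?thesis using a by (simp add: divide_simps)
  qed
  have "1 / (4 * (real (P+k))\<^sup>2 - 1) = 1 / (2 * (2 * real (P + k) - 1)) - 1 / (2 * (2 * real (P + Suc k) - 1))"
    using e3 unfolding e1 e2 u_def .
  then show ?case using Suc by simp
qed

lemma tail_sum:
  assumes "P \<ge> 1"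
  shows "(\<Sum>m\<in>{P..Q}. 1 / (4 * (real m)\<^sup>2 - 1)) \<le> 1 / (2 * (2 * real P - 1))"
proof (cases "P \<le> Q")
  case True
  then have "{P..Q} = {P..<P + (Q + 1 - P)}" by auto
  then show ?thesis using tele[OF assms, of "Q+1-P"] assms by simp
next
  case False
  then show ?thesis using assms by simp
qed

lemma F_nonneg: "m \<ge> 1 \<Longrightarrow> 0 \<le> 1 / (4 * (real m)\<^sup>2 - 1)"
proof -
  assume "m \<ge> 1"
  then have "(1::real) \<le> (real m)\<^sup>2" by simp
  then show ?thesis by simp
qed

lemma sum_img_le:
  assumes "finite A" "inj_on h A" "h ` A \<subseteq> {P..Q}" "P \<ge> 1"
  shows "(\<Sum>j\<in>A. 1 / (4 * (real (h j))\<^sup>2 - 1)) \<le> 1 / (2 * (2 * real P - 1))"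
proof -
  have "(\<Sum>j\<in>A. 1 / (4 * (real (h j))\<^sup>2 - 1)) = (\<Sum>m\<in>h ` A. 1 / (4 * (real m)\<^sup>2 - 1))"
    using assms(2) by (simp add: sum.reindex)
  also have "\<dots> \<le> (\<Sum>m\<in>{P..Q}. 1 / (4 * (real m)\<^sup>2 - 1))"
    using assms by (intro sum_mono2 F_nonneg) auto
  also have "\<dots> \<le> 1 / (2 * (2 * real P - 1))" by (rule tail_sum[OF assms(4)])
  finally show ?thesis .
qed

lemma offdiag_count:
  assumes "i \<in> {p..N}"
  shows "(\<Sum>j\<in>{p..N}. if j = i then 0 else 1 / (4 * (real i - real j)\<^sup>2 - 1)) \<le> (1::real)"
proof -
  have split: "{p..N} = {p..<i} \<union> {i} \<union> {i<..N}" using assms by auto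
  have "(\<Sum>j\<in>{p..N}. if j = i then 0 else 1 / (4 * (real i - real j)\<^sup>2 - 1)) =
        (\<Sum>j\<in>{p..<i}. 1 / (4 * (real (i - j))\<^sup>2 - 1)) + (\<Sum>j\<in>{i<..N}. 1 / (4 * (real (j - i))\<^sup>2 - 1))"
  proof -
    have "(\<Sum>j\<in>{p..N}. if j = i then 0 else 1 / (4 * (real i - real j)\<^sup>2 - 1)) =
      (\<Sum>j\<in>{p..<i}. if j = i then 0 else 1 / (4 * (real i - real j)\<^sup>2 - 1)) + (\<Sum>j\<in>{i}. if j = i then 0 else 1 / (4 * (real i - real j)\<^sup>2 - 1))
       + (\<Sum>j\<in>{i<..N}. if j = i then 0 else 1 / (4 * (real i - real j)\<^sup>2 - 1))"
      unfolding split by (subst sum.union_disjoint; auto)+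
    moreover have "(\<Sum>j\<in>{p..<i}. if j = i then 0 else 1 / (4 * (real i - real j)\<^sup>2 - 1)) = (\<Sum>j\<in>{p..<i}. 1 / (4 * (real (i - j))\<^sup>2 - 1))"
      by (intro sum.cong) (auto simp: of_nat_diff)
    moreover have "(\<Sum>j\<in>{i<..N}. if j = i then 0 else 1 / (4 * (real i - real j)\<^sup>2 - 1)) = (\<Sum>j\<in>{i<..N}. 1 / (4 * (real (j - i))\<^sup>2 - 1))"
      by (intro sum.cong) (auto simp: of_nat_diff power2_commute)
    ultimately show ?thesis by simp
  qed
  also have "\<dots> \<le> 1/(2*(2*real (1::nat) - 1)) + 1/(2*(2*real (1::nat) - 1))"
  proof (intro add_mono)
    show "(\<Sum>j\<in>{p..<i}. 1 / (4 * (real (i - j))\<^sup>2 - 1)) \<le> 1/(2*(2*real (1::nat) - 1))"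
      by (rule sum_img_le[where Q=i]) (auto simp: inj_on_def)
    show "(\<Sum>j\<in>{i<..N}. 1 / (4 * (real (j - i))\<^sup>2 - 1)) \<le> 1/(2*(2*real (1::nat) - 1))"
      by (rule sum_img_le[where Q=N]) (auto simp: inj_on_def)
  qed
  finally show ?thesis by simp
qed



lemma pair_bound:
  fixes b q g x d E :: real
  assumes b: "b > 0" and q: "q \<ge> 1" and g: "g \<ge> 2*q*b" and x: "\<bar>x\<bar> \<ge> g * d" and d: "d \<ge> 1" and E: "E \<ge> 0"
  shows "x\<^sup>2 - b\<^sup>2 > 0" "b * E / (x\<^sup>2 - b\<^sup>2) \<le> (E / (b * q\<^sup>2)) * (1 / (4 * d\<^sup>2 - 1))"
proof -
  have q2: "q\<^sup>2 \<ge> 1" using q by (simp add: one_le_power)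
  have "2*q*b*d \<le> g * d" using g d by (intro mult_right_mono) auto
  then have "2*q*b*d \<le> \<bar>x\<bar>" using x by linarith
  moreover have "0 \<le> 2*q*b*d" using q b d by simp
  ultimately have "(2*q*b*d)\<^sup>2 \<le> \<bar>x\<bar>\<^sup>2" by (rule power_mono)
  then have x2: "4 * q\<^sup>2 * b\<^sup>2 * d\<^sup>2 \<le> x\<^sup>2" by (simp add: power_mult_distrib)
  have "b\<^sup>2 \<le> q\<^sup>2 * b\<^sup>2" using q2 by (simp add: mult_le_cancel_right1)
  then have low: "b\<^sup>2 * q\<^sup>2 * (4 * d\<^sup>2 - 1) \<le> x\<^sup>2 - b\<^sup>2" using x2 by (simp add: algebra_simps)
  have "1 \<le> d\<^sup>2" using d by (simp add: one_le_power)
  then have d2: "4 * d\<^sup>2 - 1 > 0" by linarith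
  have lp: "b\<^sup>2 * q\<^sup>2 * (4 * d\<^sup>2 - 1) > 0" using d2 b q by simp
  then show "x\<^sup>2 - b\<^sup>2 > 0" using low by linarith
  have "b * E / (x\<^sup>2 - b\<^sup>2) \<le> b * E / (b\<^sup>2 * q\<^sup>2 * (4 * d\<^sup>2 - 1))"
    using low lp b E by (intro divide_left_mono) auto
  also have "\<dots> = (E / (b * q\<^sup>2)) * (1 / (4 * d\<^sup>2 - 1))"
    using b q d2 by (simp add: field_simps) (simp add: power2_eq_square algebra_simps)
  finally show "b * E / (x\<^sup>2 - b\<^sup>2) \<le> (E / (b * q\<^sup>2)) * (1 / (4 * d\<^sup>2 - 1))" .
qed

lemma K_offbound':
  assumes T: "T > 0" and b: "b = pi/T" and x: "(Re z)\<^sup>2 - b\<^sup>2 > 0" and H: "\<bar>Im z\<bar> \<le> H2"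
  shows "cmod (Kz T z) \<le> b * (1 + exp (H2 * T)) / ((Re z)\<^sup>2 - b\<^sup>2)"
proof -
  have bp: "b > 0" using T b by simp
  have "b\<^sup>2 < (Re z)\<^sup>2" using x by simp
  have "b < \<bar>Re z\<bar>"
  proof (rule ccontr)
    assume "\<not> b < \<bar>Re z\<bar>"
    then have "\<bar>Re z\<bar> \<le> \<bar>b\<bar>" using bp by simp
    then have "(Re z)\<^sup>2 \<le> b\<^sup>2" using abs_le_square_iff by blast
    with \<open>b\<^sup>2 < (Re z)\<^sup>2\<close> show False by simp
  qed
  then have "cmod (Kz T z) \<le> b * (1 + exp (\<bar>Im z\<bar> * T)) / ((Re z)\<^sup>2 - b\<^sup>2)"
    using K_offbound[OF T] b by simp
  also have "\<dots> \<le> b * (1 + exp (H2 * T)) / ((Re z)\<^sup>2 - b\<^sup>2)"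
    using x bp H T by (intro divide_right_mono mult_left_mono add_left_mono) (auto intro: mult_right_mono)
  finally show ?thesis .
qed



lemma sepabs:
  assumes gap: "\<And>n. n \<ge> p \<Longrightarrow> Re (l (Suc n)) - Re (l n) \<ge> g" and g: "g \<ge> 0"
    and i: "i \<ge> p" and j: "j \<ge> p"
  shows "\<bar>Re (l i) - Re (l j)\<bar> \<ge> g * \<bar>real i - real j\<bar>"
proof (cases "i \<le> j")
  case True
  have "Re (l j) - Re (l i) \<ge> g * (real j - real i)" by (rule sep[where x="\<lambda>n. Re (l n)" and g=g and p=p, OF gap i True])
  then show ?thesis using True by (simp add: abs_if)
next
  case False
  have "Re (l i) - Re (l j) \<ge> g * (real i - real j)" by (rule sep[where x="\<lambda>n. Re (l n)" and g=g and p=p, OF gap j]) (use False in auto)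
  then show ?thesis using False by (simp add: abs_if)
qed

lemma fam_off:
  fixes l a :: "nat \<Rightarrow> complex"
  assumes T: "T > 0" and q: "q \<ge> 1" and g: "g \<ge> 2*q*(pi/T)"
    and gap: "\<And>n. n \<ge> p \<Longrightarrow> Re (l (Suc n)) - Re (l n) \<ge> g"
    and im: "\<And>n. n \<ge> p \<Longrightarrow> \<bar>Im (l n)\<bar> \<le> H"
  shows "cmod (\<Sum>i\<in>{p..N}. \<Sum>j\<in>{p..N}. a i * cnj (a j) * (if j = i then 0 else Kz T (l i - cnj (l j))))
     \<le> (1 + exp (2*H*T)) * (T/pi) / q\<^sup>2 * (\<Sum>n\<in>{p..N}. (cmod (a n))\<^sup>2)"
proof -
  define b where "b = pi/T"
  define E where "E = 1 + exp (2*H*T)"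
  have b: "b > 0" unfolding b_def using T by simp
  have E: "E \<ge> 0" unfolding E_def by (smt (verit) exp_gt_zero)
  have g0: "g \<ge> 0" using g q b b_def by (smt (verit) mult_nonneg_nonneg)
  define B where "B i j = (if j = i then 0 else b * E / ((Re (l i) - Re (l j))\<^sup>2 - b\<^sup>2))" for i j
  define S where "S = E / (b * q\<^sup>2)"
  have key: "(Re (l i) - Re (l j))\<^sup>2 - b\<^sup>2 > 0 \<and> b * E / ((Re (l i) - Re (l j))\<^sup>2 - b\<^sup>2) \<le> S * (1 / (4 * (real i - real j)\<^sup>2 - 1))"
    if ij: "i \<in> {p..N}" "j \<in> {p..N}" "j \<noteq> i" for i j
  proof -
    have d: "\<bar>real i - real j\<bar> \<ge> 1" using ij by auto
    have x: "\<bar>Re (l i) - Re (l j)\<bar> \<ge> g * \<bar>real i - real j\<bar>" using sepabs[where l=l and g=g and p=p, OF gap g0] ij by auto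
    show ?thesis using pair_bound[OF b q g[folded b_def] x d E] unfolding S_def by simp
  qed
  have "cmod (\<Sum>i\<in>{p..N}. \<Sum>j\<in>{p..N}. a i * (\<lambda>j. cnj (a j)) j * (if j = i then 0 else Kz T (l i - cnj (l j))))
     \<le> S/2 * ((\<Sum>i\<in>{p..N}. (cmod (a i))\<^sup>2) + (\<Sum>i\<in>{p..N}. (cmod (cnj (a i)))\<^sup>2))"
  proof (rule schur[where B=B])
    show "finite {p..N}" by simp
    fix i j assume ij: "i \<in> {p..N}" "j \<in> {p..N}"
    show "B i j = B j i" unfolding B_def by (simp add: power2_commute)
    show "cmod (if j = i then 0 else Kz T (l i - cnj (l j))) \<le> B i j"
    proof (cases "j = i")
      case True then show ?thesis by (simp add: B_def)
    next
      case False
      have pos: "(Re (l i - cnj (l j)))\<^sup>2 - b\<^sup>2 > 0" using key[OF ij False] by simp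
      have "\<bar>Im (l i - cnj (l j))\<bar> \<le> 2*H" using im[of i] im[of j] ij by simp
      from K_offbound'[OF T b_def pos this] False show ?thesis by (simp add: B_def E_def)
    qed
  next
    fix i assume i: "i \<in> {p..N}"
    have "(\<Sum>j\<in>{p..N}. B i j) \<le> (\<Sum>j\<in>{p..N}. S * (if j = i then 0 else 1 / (4 * (real i - real j)\<^sup>2 - 1)))"
      using key[OF i] by (intro sum_mono) (auto simp: B_def)
    also have "\<dots> = S * (\<Sum>j\<in>{p..N}. (if j = i then 0 else 1 / (4 * (real i - real j)\<^sup>2 - 1)))"
      by (simp add: sum_distrib_left)
    also have "\<dots> \<le> S * 1"
      using offdiag_count[OF i] b E unfolding S_def by (intro mult_left_mono) auto
    finally show "(\<Sum>j\<in>{p..N}. B i j) \<le> S" by simp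
  qed
  moreover have "S/2 * ((\<Sum>i\<in>{p..N}. (cmod (a i))\<^sup>2) + (\<Sum>i\<in>{p..N}. (cmod (cnj (a i)))\<^sup>2)) = S * (\<Sum>i\<in>{p..N}. (cmod (a i))\<^sup>2)"
    by simp
  moreover have "S = E * (T/pi) / q\<^sup>2" unfolding S_def b_def using T by (simp add: field_simps)
  ultimately show ?thesis unfolding E_def by (simp add: mult.assoc)
qed



lemma fam:
  fixes l a :: "nat \<Rightarrow> complex"
  assumes T: "T > 0" and q: "q \<ge> 1" and g: "g \<ge> 2*q*(pi/T)"
    and gap: "\<And>n. n \<ge> p \<Longrightarrow> Re (l (Suc n)) - Re (l n) \<ge> g"
    and im: "\<And>n. n \<ge> p \<Longrightarrow> \<bar>Im (l n)\<bar> \<le> H"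
  shows "Qf T (\<lambda>t. \<Sum>n\<in>{p..N}. a n * exp (\<i> * l n * of_real t))
          \<le> (T * exp (2*H*T) + (1 + exp (2*H*T)) * (T/pi) / q\<^sup>2) * (\<Sum>n\<in>{p..N}. (cmod (a n))\<^sup>2)"
   and "Qf T (\<lambda>t. \<Sum>n\<in>{p..N}. a n * exp (\<i> * l n * of_real t))
          \<ge> (exp (-(2*H*T)) * (2*T/pi) - (1 + exp (2*H*T)) * (T/pi) / q\<^sup>2) * (\<Sum>n\<in>{p..N}. (cmod (a n))\<^sup>2)"
proof -
  let ?I = "{p..N}"
  let ?S = "(1 + exp (2*H*T)) * (T/pi) / q\<^sup>2"
  define Off where "Off = (\<Sum>i\<in>?I. \<Sum>j\<in>?I. a i * cnj (a j) * (if j = i then 0 else Kz T (l i - cnj (l j))))"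
  define Dg where "Dg = (\<Sum>i\<in>?I. (cmod (a i))\<^sup>2 * Re (Kz T (l i - cnj (l i))))"
  have Q: "Qf T (\<lambda>t. \<Sum>n\<in>?I. a n * exp (\<i> * l n * of_real t)) = Dg + Re Off"
  proof -
    have "(\<Sum>i\<in>?I. \<Sum>j\<in>?I. a i * cnj (a j) * Kz T (l i - cnj (l j))) =
       (\<Sum>i\<in>?I. a i * cnj (a i) * Kz T (l i - cnj (l i)) + (\<Sum>j\<in>?I. a i * cnj (a j) * (if j = i then 0 else Kz T (l i - cnj (l j)))))"
    proof (intro sum.cong refl)
      fix i assume i: "i \<in> ?I"
      have "(\<Sum>j\<in>?I. a i * cnj (a j) * Kz T (l i - cnj (l j))) =
         a i * cnj (a i) * Kz T (l i - cnj (l i)) + (\<Sum>j\<in>?I. if j = i then 0 else a i * cnj (a j) * Kz T (l i - cnj (l j)))"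
        by (rule sum_split_diag) (use i in auto)
      also have "(\<Sum>j\<in>?I. if j = i then 0 else a i * cnj (a j) * Kz T (l i - cnj (l j))) =
          (\<Sum>j\<in>?I. a i * cnj (a j) * (if j = i then 0 else Kz T (l i - cnj (l j))))"
        by (intro sum.cong) auto
      finally show "(\<Sum>j\<in>?I. a i * cnj (a j) * Kz T (l i - cnj (l j))) =
         a i * cnj (a i) * Kz T (l i - cnj (l i)) + (\<Sum>j\<in>?I. a i * cnj (a j) * (if j = i then 0 else Kz T (l i - cnj (l j))))" .
    qed
    also have "\<dots> = (\<Sum>i\<in>?I. a i * cnj (a i) * Kz T (l i - cnj (l i))) + Off"
      unfolding Off_def by (simp add: sum.distrib)
    finally have e: "(\<Sum>i\<in>?I. \<Sum>j\<in>?I. a i * cnj (a j) * Kz T (l i - cnj (l j))) = (\<Sum>i\<in>?I. a i * cnj (a i) * Kz T (l i - cnj (l i))) + Off" .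
    have "Re (\<Sum>i\<in>?I. a i * cnj (a i) * Kz T (l i - cnj (l i))) = Dg"
      unfolding Dg_def Re_sum
    proof (intro sum.cong refl)
      fix i
      have "a i * cnj (a i) = of_real ((cmod (a i))\<^sup>2)" by (simp only: complex_norm_square)
      then show "Re (a i * cnj (a i) * Kz T (l i - cnj (l i))) = (cmod (a i))\<^sup>2 * Re (Kz T (l i - cnj (l i)))"
        by simp
    qed
    then show ?thesis using Q_gram[OF T, of ?I a l] e by simp
  qed
  have Off: "\<bar>Re Off\<bar> \<le> ?S * (\<Sum>n\<in>?I. (cmod (a n))\<^sup>2)"
    using fam_off[where l=l and p=p and g=g and H=H and a=a and N=N, OF T q g gap im] abs_Re_le_cmod[of Off] unfolding Off_def by linarith
  have imd: "\<bar>Im (l i - cnj (l i))\<bar> \<le> 2*H" if "i \<in> ?I" for i using im[of i] that by auto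
  have "Dg \<le> (\<Sum>i\<in>?I. (cmod (a i))\<^sup>2 * (T * exp (2*H*T)))"
    unfolding Dg_def
  proof (intro sum_mono mult_left_mono)
    fix i assume i: "i \<in> ?I"
    show "Re (Kz T (l i - cnj (l i))) \<le> T * exp (2*H*T)"
      using K_norm[OF T imd[OF i]] abs_Re_le_cmod[of "Kz T (l i - cnj (l i))"] by (simp add: mult.assoc)
  qed auto
  then have "Dg \<le> T * exp (2*H*T) * (\<Sum>n\<in>?I. (cmod (a n))\<^sup>2)" by (simp add: sum_distrib_left mult.commute)
  then show "Qf T (\<lambda>t. \<Sum>n\<in>?I. a n * exp (\<i> * l n * of_real t))
          \<le> (T * exp (2*H*T) + ?S) * (\<Sum>n\<in>?I. (cmod (a n))\<^sup>2)"
    using Q Off by (simp add: distrib_right)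
  have "Dg \<ge> (\<Sum>i\<in>?I. (cmod (a i))\<^sup>2 * (exp (-(2*H*T)) * (2*T/pi)))"
    unfolding Dg_def
  proof (intro sum_mono mult_left_mono)
    fix i assume i: "i \<in> ?I"
    have "exp (-(2*H*T)) * (2*T/pi) \<le> exp (- \<bar>Im (l i - cnj (l i))\<bar> * T) * (2*T/pi)"
      using imd[OF i] T by (intro mult_right_mono) (auto intro: mult_right_mono)
    also have "\<dots> \<le> Re (Kz T (l i - cnj (l i)))" by (rule K_diag[OF T]) simp
    finally show "exp (-(2*H*T)) * (2*T/pi) \<le> Re (Kz T (l i - cnj (l i)))" .
  qed auto
  moreover have "(\<Sum>i\<in>?I. (cmod (a i))\<^sup>2 * (exp (-(2*H*T)) * (2*T/pi))) = (\<Sum>n\<in>?I. (cmod (a n))\<^sup>2) * (exp (-(2*H*T)) * (2*T/pi))"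
    by (rule sum_distrib_right[symmetric])
  ultimately have "Dg \<ge> exp (-(2*H*T)) * (2*T/pi) * (\<Sum>n\<in>?I. (cmod (a n))\<^sup>2)" by (simp only: mult.commute)
  then show "Qf T (\<lambda>t. \<Sum>n\<in>?I. a n * exp (\<i> * l n * of_real t))
          \<ge> (exp (-(2*H*T)) * (2*T/pi) - ?S) * (\<Sum>n\<in>?I. (cmod (a n))\<^sup>2)"
    using Q Off by (simp add: left_diff_distrib)
qed



lemma half_twice: "(x::real)/2 * (y + y) = x * y" by simp

lemma fam_cross:
  fixes l a :: "nat \<Rightarrow> complex"
  assumes T: "T > 0" and q: "q \<ge> 1" and g: "g \<ge> 2*q*(pi/T)"
    and gap: "\<And>n. n \<ge> p \<Longrightarrow> Re (l (Suc n)) - Re (l n) \<ge> g"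
    and im: "\<And>n. n \<ge> p \<Longrightarrow> \<bar>Im (l n)\<bar> \<le> H"
    and P: "P \<ge> 1" and start: "2 * Re (l p) \<ge> g * real P"
  shows "cmod (\<Sum>i\<in>{p..N}. \<Sum>j\<in>{p..N}. a i * a j * Kz T (l i + l j))
     \<le> (1 + exp (2*H*T)) * (T/pi) / q\<^sup>2 / (2 * (2 * real P - 1)) * (\<Sum>n\<in>{p..N}. (cmod (a n))\<^sup>2)"
proof -
  define b where "b = pi/T"
  define E where "E = 1 + exp (2*H*T)"
  have b: "b > 0" unfolding b_def using T by simp
  have E: "E \<ge> 0" unfolding E_def by (smt (verit) exp_gt_zero)
  have g0: "g \<ge> 0" using g q b b_def by (smt (verit) mult_nonneg_nonneg)
  define B where "B i j = b * E / ((Re (l i + l j))\<^sup>2 - b\<^sup>2)" for i j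
  define S where "S = E / (b * q\<^sup>2)"
  have key: "(Re (l i + l j))\<^sup>2 - b\<^sup>2 > 0 \<and> B i j \<le> S * (1 / (4 * (real (P + j - p))\<^sup>2 - 1))"
    if ij: "i \<in> {p..N}" "j \<in> {p..N}" for i j
  proof -
    have d: "real (P + j - p) \<ge> 1" using ij P by auto
    have xi: "Re (l i) - Re (l p) \<ge> g * (real i - real p)"
      by (rule sep[where x="\<lambda>n. Re (l n)" and g=g and p=p, OF gap]) (use ij in auto)
    have xj: "Re (l j) - Re (l p) \<ge> g * (real j - real p)"
      by (rule sep[where x="\<lambda>n. Re (l n)" and g=g and p=p, OF gap]) (use ij in auto)
    have "g * (real i - real p) \<ge> 0" using ij g0 by auto
    then have "Re (l i + l j) \<ge> g * real P + g * (real j - real p)" using xi xj start by simp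
    also have "g * real P + g * (real j - real p) = g * real (P + j - p)" using ij by (simp add: algebra_simps of_nat_diff)
    finally have "Re (l i + l j) \<ge> g * real (P + j - p)" .
    moreover have "g * real (P + j - p) \<ge> 0" using g0 by simp
    ultimately have x: "\<bar>Re (l i + l j)\<bar> \<ge> g * real (P + j - p)" by linarith
    show ?thesis using pair_bound[OF b q g[folded b_def] x d E] unfolding S_def B_def by simp
  qed
  have "cmod (\<Sum>i\<in>{p..N}. \<Sum>j\<in>{p..N}. a i * a j * Kz T (l i + l j))
     \<le> (S / (2 * (2 * real P - 1)))/2 * ((\<Sum>i\<in>{p..N}. (cmod (a i))\<^sup>2) + (\<Sum>i\<in>{p..N}. (cmod (a i))\<^sup>2))"
  proof (rule schur[where B=B])
    show "finite {p..N}" by simp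
    fix i j assume ij: "i \<in> {p..N}" "j \<in> {p..N}"
    show "B i j = B j i" unfolding B_def by (simp add: add.commute)
    have pos: "(Re (l i + l j))\<^sup>2 - b\<^sup>2 > 0" using key[OF ij] by simp
    have "\<bar>Im (l i + l j)\<bar> \<le> 2*H" using im[of i] im[of j] ij by simp
    from K_offbound'[OF T b_def pos this] show "cmod (Kz T (l i + l j)) \<le> B i j" by (simp add: B_def E_def)
  next
    fix i assume i: "i \<in> {p..N}"
    have "(\<Sum>j\<in>{p..N}. B i j) \<le> (\<Sum>j\<in>{p..N}. S * (1 / (4 * (real (P + j - p))\<^sup>2 - 1)))"
      using key[OF i] by (intro sum_mono) auto
    also have "\<dots> = S * (\<Sum>j\<in>{p..N}. 1 / (4 * (real (P + j - p))\<^sup>2 - 1))"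
      by (simp add: sum_distrib_left)
    also have "\<dots> \<le> S * (1 / (2 * (2 * real P - 1)))"
    proof (intro mult_left_mono)
      show "(\<Sum>j\<in>{p..N}. 1 / (4 * (real (P + j - p))\<^sup>2 - 1)) \<le> 1 / (2 * (2 * real P - 1))"
        by (rule sum_img_le[where h="\<lambda>j. P + j - p" and Q="P + N - p"]) (use P in \<open>auto simp: inj_on_def\<close>)
      show "0 \<le> S" unfolding S_def using b E by simp
    qed
    finally show "(\<Sum>j\<in>{p..N}. B i j) \<le> S / (2 * (2 * real P - 1))" by simp
  qed
  moreover have "(S / (2 * (2 * real P - 1)))/2 * ((\<Sum>i\<in>{p..N}. (cmod (a i))\<^sup>2) + (\<Sum>i\<in>{p..N}. (cmod (a i))\<^sup>2)) = (S / (2 * (2 * real P - 1))) * (\<Sum>i\<in>{p..N}. (cmod (a i))\<^sup>2)"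
    by (rule half_twice)
  moreover have "S = E * (T/pi) / q\<^sup>2" unfolding S_def b_def using T by (simp add: field_simps)
  ultimately show ?thesis unfolding E_def by (simp add: mult.assoc)
qed



lemma sin_scale:
  assumes a: "0 < a" "a \<le> 1" and u: "0 \<le> u" "u \<le> pi"
  shows "a * sin u \<le> sin (a * u)"
proof -
  have "(\<lambda>v. sin (a * v) - a * sin v) 0 \<le> (\<lambda>v. sin (a * v) - a * sin v) u"
  proof (rule DERIV_nonneg_imp_nondecreasing[OF u(1)])
    fix x assume x: "0 \<le> x" "x \<le> u"
    have "((\<lambda>v. sin (a * v) - a * sin v) has_real_derivative (cos (a * x) * a - a * cos x)) (at x)"
      by (auto intro!: derivative_eq_intros)
    moreover have "cos x \<le> cos (a * x)"
      using x a u by (intro cos_monotone_0_pi_le) (auto simp: mult_left_le_one_le)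
    then have "0 \<le> cos (a * x) * a - a * cos x" using a by (simp add: algebra_simps)
    ultimately show "\<exists>y. ((\<lambda>v. sin (a * v) - a * sin v) has_real_derivative y) (at x) \<and> 0 \<le> y" by blast
  qed
  then show ?thesis by simp
qed

lemma Q_mono_T:
  assumes T1: "0 < T1" "T1 \<le> T" and f: "continuous_on {0..T} f"
  shows "(T1/T) * Qf T1 f \<le> Qf T f"
proof -
  have T: "T > 0" using T1 by simp
  have f1: "continuous_on {0..T1} f" using T1 by (intro continuous_on_subset[OF f]) auto
  have "(T1/T) * Qf T1 f = integral {0..T1} (\<lambda>t. (T1/T) * (sin (pi*t/T1) * (cmod (f t))\<^sup>2))"
    unfolding Qf_def by simp
  also have "\<dots> \<le> integral {0..T1} (\<lambda>t. sin (pi*t/T) * (cmod (f t))\<^sup>2)"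
  proof (rule integral_le)
    show "(\<lambda>t. (T1/T) * (sin (pi*t/T1) * (cmod (f t))\<^sup>2)) integrable_on {0..T1}"
      using Q_int[OF T1(1) f1] by (rule integrable_on_mult_right)
    show "(\<lambda>t. sin (pi*t/T) * (cmod (f t))\<^sup>2) integrable_on {0..T1}"
      using f1 T by (intro integrable_continuous_interval continuous_intros) auto
    fix t assume t: "t \<in> {0..T1}"
    have "(T1/T) * sin (pi*t/T1) \<le> sin ((T1/T) * (pi*t/T1))"
      using t T1 by (intro sin_scale) (auto simp: field_simps)
    also have "(T1/T) * (pi*t/T1) = pi*t/T" using T1 by (simp add: field_simps)
    finally have "(T1/T) * sin (pi*t/T1) * (cmod (f t))\<^sup>2 \<le> sin (pi*t/T) * (cmod (f t))\<^sup>2"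
      by (rule mult_right_mono) simp
    then show "(T1/T) * (sin (pi*t/T1) * (cmod (f t))\<^sup>2) \<le> sin (pi*t/T) * (cmod (f t))\<^sup>2"
      by (simp only: mult.assoc)
  qed
  also have "\<dots> \<le> integral {0..T} (\<lambda>t. sin (pi*t/T) * (cmod (f t))\<^sup>2)"
  proof (rule integral_subset_le)
    show "{0..T1} \<subseteq> {0..T}" using T1 by auto
    show "(\<lambda>t. sin (pi*t/T) * (cmod (f t))\<^sup>2) integrable_on {0..T1}"
      using f1 T by (intro integrable_continuous_interval continuous_intros) auto
    show "(\<lambda>t. sin (pi*t/T) * (cmod (f t))\<^sup>2) integrable_on {0..T}" by (rule Q_int[OF T f])
    show "\<forall>x\<in>{0..T}. 0 \<le> sin (pi*x/T) * (cmod (f x))\<^sup>2" using sin_w_nonneg[OF T] by auto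
  qed
  finally show ?thesis unfolding Qf_def .
qed

lemma pw_re2: "(cmod (z + cnj z))\<^sup>2 = 2 * (cmod z)\<^sup>2 + 2 * Re (z * z)"
  by (simp add: cmod_def power2_eq_square algebra_simps)

lemma pw_re4: "(cmod (z + cnj z))\<^sup>2 \<le> 4 * (cmod z)\<^sup>2"
  by (simp add: cmod_def power2_eq_square algebra_simps)

lemma pw_2: "(cmod (a + b))\<^sup>2 \<le> 2 * (cmod a)\<^sup>2 + 2 * (cmod b)\<^sup>2"
proof -
  have "cmod (a + b) \<le> cmod a + cmod b" by (rule norm_triangle_ineq)
  then have "(cmod (a + b))\<^sup>2 \<le> (cmod a + cmod b)\<^sup>2" by (simp add: power_mono)
  also have "\<dots> \<le> 2 * (cmod a)\<^sup>2 + 2 * (cmod b)\<^sup>2"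
  proof -
    have "0 \<le> (cmod a - cmod b)\<^sup>2" by simp
    then show ?thesis by (simp add: power2_eq_square algebra_simps)
  qed
  finally show ?thesis .
qed

lemma pw_3: "(cmod (a + b + c))\<^sup>2 \<le> 3 * (cmod a)\<^sup>2 + 3 * (cmod b)\<^sup>2 + 3 * (cmod c)\<^sup>2"
proof -
  have "cmod (a + b + c) \<le> cmod a + cmod b + cmod c" by (metis norm_triangle_ineq add_right_mono order_trans)
  then have "(cmod (a + b + c))\<^sup>2 \<le> (cmod a + cmod b + cmod c)\<^sup>2" by (simp add: power_mono)
  also have "\<dots> \<le> 3 * (cmod a)\<^sup>2 + 3 * (cmod b)\<^sup>2 + 3 * (cmod c)\<^sup>2"
  proof -
    have "0 \<le> (cmod a - cmod b)\<^sup>2 + (cmod b - cmod c)\<^sup>2 + (cmod a - cmod c)\<^sup>2" by simp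
    then show ?thesis by (simp add: power2_eq_square algebra_simps)
  qed
  finally show ?thesis .
qed

lemma pw_theta:
  assumes th: "\<theta> > 0"
  shows "(cmod (a + b))\<^sup>2 \<le> (1 + \<theta>) * (cmod a)\<^sup>2 + (1 + 1/\<theta>) * (cmod b)\<^sup>2"
proof -
  have "cmod (a + b) \<le> cmod a + cmod b" by (rule norm_triangle_ineq)
  then have "(cmod (a + b))\<^sup>2 \<le> (cmod a + cmod b)\<^sup>2" by (simp add: power_mono)
  also have "\<dots> \<le> (1 + \<theta>) * (cmod a)\<^sup>2 + (1 + 1/\<theta>) * (cmod b)\<^sup>2"
  proof -
    have "0 \<le> (\<theta> * cmod a - cmod b)\<^sup>2 / \<theta>" using th by simp
    also have "(\<theta> * cmod a - cmod b)\<^sup>2 / \<theta> = \<theta> * (cmod a)\<^sup>2 - 2 * cmod a * cmod b + (cmod b)\<^sup>2 / \<theta>"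
      using th by (simp add: power2_eq_square field_simps)
    finally show ?thesis by (simp add: power2_eq_square algebra_simps add_divide_distrib)
  qed
  finally show ?thesis .
qed



lemma Q_re2:
  fixes a l :: "nat \<Rightarrow> complex" and p N :: nat
  assumes T: "T > 0"
  shows "Qf T (\<lambda>t. (\<Sum>n\<in>{p..N}. a n * exp (\<i> * l n * of_real t)) + cnj (\<Sum>n\<in>{p..N}. a n * exp (\<i> * l n * of_real t)))
    = 2 * Qf T (\<lambda>t. \<Sum>n\<in>{p..N}. a n * exp (\<i> * l n * of_real t)) + 2 * Re (\<Sum>i\<in>{p..N}. \<Sum>j\<in>{p..N}. a i * a j * Kz T (l i + l j))"
proof -
  let ?f = "\<lambda>t::real. \<Sum>n\<in>{p..N}. a n * exp (\<i> * l n * of_real t)"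
  have cf: "continuous_on {0..T} ?f" by (intro continuous_intros)
  have fin: "finite {p..N}" by simp
  have h1: "((\<lambda>t. sin (pi*t/T) * (cmod (?f t))\<^sup>2) has_integral Qf T ?f) {0..T}"
    unfolding Qf_def by (intro integrable_integral Q_int T cf)
  have h2: "((\<lambda>t. Re (of_real (sin (pi*t/T)) * (?f t * ?f t))) has_integral Re (\<Sum>i\<in>{p..N}. \<Sum>j\<in>{p..N}. a i * a j * Kz T (l i + l j))) {0..T}"
    by (rule has_integral_Re[OF gram[where a=a and l=l and c=a and m=l and I="{p..N}" and J="{p..N}", OF T fin fin]])
  have "((\<lambda>t. 2 * (sin (pi*t/T) * (cmod (?f t))\<^sup>2) + 2 * Re (of_real (sin (pi*t/T)) * (?f t * ?f t))) has_integral
     (2 * Qf T ?f + 2 * Re (\<Sum>i\<in>{p..N}. \<Sum>j\<in>{p..N}. a i * a j * Kz T (l i + l j)))) {0..T}"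
    by (intro has_integral_add has_integral_mult_right h1 h2)
  then have "((\<lambda>t. sin (pi*t/T) * (cmod (?f t + cnj (?f t)))\<^sup>2) has_integral
     (2 * Qf T ?f + 2 * Re (\<Sum>i\<in>{p..N}. \<Sum>j\<in>{p..N}. a i * a j * Kz T (l i + l j)))) {0..T}"
  proof (rule has_integral_eq[rotated])
    fix t
    show "2 * (sin (pi*t/T) * (cmod (?f t))\<^sup>2) + 2 * Re (of_real (sin (pi*t/T)) * (?f t * ?f t)) =
        sin (pi*t/T) * (cmod (?f t + cnj (?f t)))\<^sup>2"
      unfolding pw_re2 by (simp add: algebra_simps)
  qed
  then show ?thesis unfolding Qf_def by (rule integral_unique)
qed

lemma Q_sym: "Qf T (\<lambda>t. u N t - u M t) = Qf T (\<lambda>t. u M t - u N t)"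
  unfolding Qf_def by (simp add: norm_minus_commute)

lemma Q_conv:
  assumes T: "T > 0" and c: "\<And>N. continuous_on {0..T} (u N)"
    and small: "\<And>e. e > 0 \<Longrightarrow> \<exists>N0. \<forall>N\<ge>N0. \<forall>M\<ge>N. Qf T (\<lambda>t. u M t - u N t) \<le> e"
  shows "convergent (\<lambda>N. Qf T (u N))"
proof -
  have cd: "continuous_on {0..T} (\<lambda>t. u M t - u N t)" for M N by (intro continuous_intros c)
  have small2: "\<exists>N0. \<forall>N\<ge>N0. \<forall>M\<ge>N0. Qf T (\<lambda>t. u M t - u N t) \<le> e" if e: "e > 0" for e
  proof -
    obtain N0 where N0: "\<forall>N\<ge>N0. \<forall>M\<ge>N. Qf T (\<lambda>t. u M t - u N t) \<le> e" using small[OF e] by blast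
    have "Qf T (\<lambda>t. u M t - u N t) \<le> e" if "N \<ge> N0" "M \<ge> N0" for N M
    proof (cases "N \<le> M")
      case True then show ?thesis using N0 that by auto
    next
      case False then show ?thesis using N0[rule_format, of M N] that Q_sym[of T u M N] by auto
    qed
    then show ?thesis by blast
  qed
  have key: "Qf T (u M) \<le> (1 + \<theta>) * Qf T (u N) + (1 + 1/\<theta>) * Qf T (\<lambda>t. u M t - u N t)" if th: "\<theta> > 0" for \<theta> M N
  proof (rule Q_le2[OF T c c cd])
    fix t
    have "u M t = u N t + (u M t - u N t)" by simp
    then show "(cmod (u M t))\<^sup>2 \<le> (1 + \<theta>) * (cmod (u N t))\<^sup>2 + (1 + 1/\<theta>) * (cmod (u M t - u N t))\<^sup>2"
      using pw_theta[OF th, of "u N t" "u M t - u N t"] by simp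
  qed
  obtain N1 where N1: "\<forall>N\<ge>N1. \<forall>M\<ge>N1. Qf T (\<lambda>t. u M t - u N t) \<le> 1" using small2[of 1] by auto
  define Bd where "Bd = 2 * Qf T (u N1) + 2"
  have Bd0: "Bd \<ge> 0" unfolding Bd_def using Q_nonneg[OF T c] by (smt (verit))
  have bnd: "Qf T (u M) \<le> Bd" if "M \<ge> N1" for M
    using key[of 1 M N1] N1[rule_format, of N1 M] that unfolding Bd_def by auto
  have "Cauchy (\<lambda>N. Qf T (u N))"
  proof (rule CauchyI)
    fix e :: real assume e: "e > 0"
    define \<theta> where "\<theta> = e / (2 * (Bd + 1))"
    have th: "\<theta> > 0" unfolding \<theta>_def using e Bd0 by simp
    define e' where "e' = e / (4 * (1 + 1/\<theta>))"
    have e': "e' > 0" unfolding e'_def using e th by (simp add: add_pos_pos)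
    obtain N2 where N2: "\<forall>N\<ge>N2. \<forall>M\<ge>N2. Qf T (\<lambda>t. u M t - u N t) \<le> e'" using small2[OF e'] by auto
    have thB: "\<theta> * Bd < e/2" unfolding \<theta>_def using e Bd0 by (simp add: field_simps)
    have aux: "\<And>x::real. x > 0 \<Longrightarrow> x * (e/(4*x)) = e/4" by simp
    have "1 + 1/\<theta> > 0" using th by (simp add: add_pos_pos)
    then have te: "(1 + 1/\<theta>) * e' = e/4" unfolding e'_def by (rule aux)
    have one: "Qf T (u m) - Qf T (u n) < e/2 + e/4" if mn: "m \<ge> max N1 N2" "n \<ge> max N1 N2" for m n
    proof -
      have "Qf T (u m) \<le> (1 + \<theta>) * Qf T (u n) + (1 + 1/\<theta>) * Qf T (\<lambda>t. u m t - u n t)" by (rule key[OF th])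
      moreover have "(1 + 1/\<theta>) * Qf T (\<lambda>t. u m t - u n t) \<le> (1 + 1/\<theta>) * e'"
        using N2 mn th by (intro mult_left_mono) (auto simp: add_pos_pos less_imp_le)
      moreover have "\<theta> * Qf T (u n) \<le> \<theta> * Bd" using bnd[of n] mn th by (intro mult_left_mono) auto
      ultimately show ?thesis using thB te by (simp add: algebra_simps)
    qed
    show "\<exists>M. \<forall>m\<ge>M. \<forall>n\<ge>M. norm (Qf T (u m) - Qf T (u n)) < e"
    proof (intro exI allI impI)
      fix m n assume "m \<ge> max N1 N2" "n \<ge> max N1 N2"
      from one[OF this] one[OF this(2,1)] e show "norm (Qf T (u m) - Qf T (u n)) < e" by auto
    qed
  qed
  then show ?thesis by (simp add: Cauchy_convergent_iff)
qed

lemma split_ivl: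
  assumes "p \<le> Suc N" "N \<le> M"
  shows "sum f {p..M} = sum f {p..N} + sum f {Suc N..M}"
proof -
  have "{p..M} = {p..N} \<union> {Suc N..M}" using assms by auto
  then show ?thesis by (simp add: sum.union_disjoint ivl_disj_int)
qed

lemma u2_dec:
  "u2_partial \<omega> \<zeta> c d C D p M t =
    (\<Sum>n\<in>{p..M}. (d n * D n) * exp (\<i> * \<zeta> n * of_real t)) + cnj (\<Sum>n\<in>{p..M}. (d n * D n) * exp (\<i> * \<zeta> n * of_real t))
  + ((\<Sum>n\<in>{p..M}. (c n * C n) * exp (\<i> * \<omega> n * of_real t)) + cnj (\<Sum>n\<in>{p..M}. (c n * C n) * exp (\<i> * \<omega> n * of_real t)))"
  unfolding u2_partial_def by (simp add: sum.distrib exp_cnj algebra_simps)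

lemma u1_dec:
  "u1_partial \<omega> \<zeta> r C D R p M t =
    ((\<Sum>n\<in>{p..M}. C n * exp (\<i> * \<omega> n * of_real t)) + cnj (\<Sum>n\<in>{p..M}. C n * exp (\<i> * \<omega> n * of_real t)))
  + (\<Sum>n\<in>{p..M}. of_real (R n * exp (r n * t)))
  + ((\<Sum>n\<in>{p..M}. D n * exp (\<i> * \<zeta> n * of_real t)) + cnj (\<Sum>n\<in>{p..M}. D n * exp (\<i> * \<zeta> n * of_real t)))"
  unfolding u1_partial_def by (simp add: sum.distrib exp_cnj algebra_simps)

lemma u1_diff:
  assumes "p \<le> N" "N \<le> M"
  shows "u1_partial \<omega> \<zeta> r C D R p M t - u1_partial \<omega> \<zeta> r C D R p N t = u1_partial \<omega> \<zeta> r C D R (Suc N) M t"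
  unfolding u1_partial_def by (subst split_ivl[of p N M]) (use assms in auto)

lemma u2_diff:
  assumes "p \<le> N" "N \<le> M"
  shows "u2_partial \<omega> \<zeta> c d C D p M t - u2_partial \<omega> \<zeta> c d C D p N t = u2_partial \<omega> \<zeta> c d C D (Suc N) M t"
  unfolding u2_partial_def by (subst split_ivl[of p N M]) (use assms in auto)



lemma Q_const: "T > 0 \<Longrightarrow> Qf T (\<lambda>t. of_real c) = c\<^sup>2 * (2*T/pi)"
  unfolding Qf_def using integral_unique[OF has_integral_mult_right[OF sin_int, of T "c\<^sup>2"]]
  by (simp add: mult.commute)

lemma exp_small:
  fixes x :: real assumes "0 \<le> x" "x \<le> 1/2"
  shows "exp x \<le> 1 + 2*x" "1 - x \<le> exp (-x)"
proof -
  show "exp x \<le> 1 + 2*x" using exp_bound_lemma[of x] assms by simp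
  show "1 - x \<le> exp (-x)" using exp_ge_add_one_self[of "-x"] by simp
qed

lemma lower_T1:
  fixes \<omega> \<zeta> c d C D :: "nat \<Rightarrow> complex"
  assumes T1: "Tm > 0" "Tm \<le> T1" "T1 \<le> 2*Tm"
    and q0: "q0 \<ge> 1" and gq: "g \<ge> 2*q0*(pi/Tm)"
    and \<delta>: "0 < \<delta>" "\<delta> \<le> 1" "1/q0\<^sup>2 \<le> 1 - \<delta>"
    and gz: "\<And>n. n \<ge> n0 \<Longrightarrow> Re (\<zeta> (Suc n)) - Re (\<zeta> n) \<ge> g"
    and gw: "\<And>n. n \<ge> n0 \<Longrightarrow> Re (\<omega> (Suc n)) - Re (\<omega> n) \<ge> g"
    and iz: "\<And>n. n \<ge> n0 \<Longrightarrow> \<bar>Im (\<zeta> n)\<bar> \<le> \<eta>" and \<eta>: "0 \<le> \<eta>" "4*\<eta>*Tm \<le> \<delta>/8"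
    and iw: "\<And>n. n \<ge> n0 \<Longrightarrow> \<bar>Im (\<omega> n)\<bar> \<le> Hw" and Hw: "0 \<le> Hw"
    and P: "P \<ge> 1" "2 * real P - 1 \<ge> 8/\<delta>" and st: "2 * Re (\<zeta> n0) \<ge> g * real P"
    and U0: "U0 = 2*Tm*exp (4*Hw*Tm) + (1 + exp (4*Hw*Tm))*(2*Tm/pi)"
    and cw: "\<And>n. n \<ge> n0 \<Longrightarrow> (cmod (c n * C n))\<^sup>2 \<le> Kw * (cmod (d n * D n))\<^sup>2"
    and Kw: "Kw \<ge> 0" "4 * U0 * Kw \<le> (Tm/pi) * (\<delta>/4)"
  shows "Qf T1 (u2_partial \<omega> \<zeta> c d C D n0 N) \<ge> (Tm/pi) * \<delta> * (\<Sum>n\<in>{n0..N}. (cmod (d n * D n))\<^sup>2)"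
proof -
  have T: "T1 > 0" using T1 by simp
  have pi0: "pi > 0" by simp
  have g1: "g \<ge> 2*q0*(pi/T1)"
  proof -
    have "pi/T1 \<le> pi/Tm" using T1 by (intro divide_left_mono) auto
    then have "2*q0*(pi/T1) \<le> 2*q0*(pi/Tm)" using q0 by (intro mult_left_mono) auto
    then show ?thesis using gq by linarith
  qed
  define a where "a n = d n * D n" for n
  define b where "b n = c n * C n" for n
  define A where "A = (\<Sum>n\<in>{n0..N}. (cmod (a n))\<^sup>2)"
  have A0: "A \<ge> 0" unfolding A_def by (simp add: sum_nonneg)
  define fz where "fz t = (\<Sum>n\<in>{n0..N}. a n * exp (\<i> * \<zeta> n * of_real t))" for t :: real
  define fw where "fw t = (\<Sum>n\<in>{n0..N}. b n * exp (\<i> * \<omega> n * of_real t))" for t :: real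
  define F where "F t = fz t + cnj (fz t)" for t
  define G where "G t = fw t + cnj (fw t)" for t
  have u2: "u2_partial \<omega> \<zeta> c d C D n0 N t = F t + G t" for t
    unfolding F_def G_def fz_def fw_def a_def b_def by (rule u2_dec)
  have cfz: "continuous_on {0..T1} fz" unfolding fz_def by (intro continuous_intros)
  have cfw: "continuous_on {0..T1} fw" unfolding fw_def by (intro continuous_intros)
  have cF: "continuous_on {0..T1} F" unfolding F_def by (intro continuous_intros cfz)
  have cG: "continuous_on {0..T1} G" unfolding G_def by (intro continuous_intros cfw)
  have cu: "continuous_on {0..T1} (u2_partial \<omega> \<zeta> c d C D n0 N)" unfolding u2_partial_def by (intro continuous_intros)
  define Y where "Y = (T1/pi) * \<delta> * A"
  have Y0: "Y \<ge> 0" unfolding Y_def using T \<delta> A0 by simp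
  define x where "x = 2*\<eta>*T1"
  have x0: "0 \<le> x" unfolding x_def using \<eta> T by simp
  have x1: "x \<le> \<delta>/8"
  proof -
    have "2*\<eta>*T1 \<le> 2*\<eta>*(2*Tm)" using \<eta> T1 by (intro mult_left_mono) auto
    moreover have "2*\<eta>*(2*Tm) = 4*\<eta>*Tm" by simp
    ultimately show ?thesis unfolding x_def using \<eta>(2) by linarith
  qed
  have xh: "x \<le> 1/2" using x1 \<delta> by simp
  have e1: "exp x \<le> 1 + 2*x" "1 - x \<le> exp (-x)" using exp_small[OF x0 xh] by auto
  have iq: "1/q0\<^sup>2 \<le> 1" using q0 by (simp add: power_le_one one_le_power)
  have iq0: "0 \<le> 1/q0\<^sup>2" by simp
  have lowz: "Qf T1 fz \<ge> (exp (-(2*\<eta>*T1)) * (2*T1/pi) - (1 + exp (2*\<eta>*T1)) * (T1/pi) / q0\<^sup>2) * A"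
    unfolding fz_def A_def by (rule fam(2)[where l=\<zeta> and p=n0 and H=\<eta> and g=g and a=a and N=N, OF T q0 g1 gz iz])
  have c1: "exp (-(2*\<eta>*T1)) * (2*T1/pi) - (1 + exp (2*\<eta>*T1)) * (T1/pi) / q0\<^sup>2
       = (T1/pi) * (2 * exp (-x) - (1 + exp x) * (1/q0\<^sup>2))" unfolding x_def using q0 by (simp add: field_simps)
  have c2: "3/2*\<delta> \<le> 2 * exp (-x) - (1 + exp x) * (1/q0\<^sup>2)"
  proof -
    have "(1 + exp x) * (1/q0\<^sup>2) \<le> (2 + 2*x) * (1 - \<delta>)"
      using e1 \<delta> x0 iq0 by (intro mult_mono) auto
    moreover have "(2 + 2*x) * (1 - \<delta>) \<le> 2 - 2*\<delta> + 2*x" using x0 \<delta> by (simp add: algebra_simps)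
    ultimately show ?thesis using e1 x1 by linarith
  qed
  have "(T1/pi) * (3/2*\<delta>) \<le> (T1/pi) * (2 * exp (-x) - (1 + exp x) * (1/q0\<^sup>2))"
    using c2 T by (intro mult_left_mono) auto
  then have l1: "(T1/pi) * (3/2*\<delta>) * A \<le> (T1/pi) * (2 * exp (-x) - (1 + exp x) * (1/q0\<^sup>2)) * A"
    using A0 by (rule mult_right_mono)
  have l2: "(T1/pi) * (3/2*\<delta>) * A = 3/2 * Y" unfolding Y_def by simp
  have l3: "(T1/pi) * (2 * exp (-x) - (1 + exp x) * (1/q0\<^sup>2)) * A \<le> Qf T1 fz"
    using lowz unfolding c1 .
  have lowz': "Qf T1 fz \<ge> 3/2 * Y" using l1 l2 l3 by linarith
  define X where "X = (\<Sum>i\<in>{n0..N}. \<Sum>j\<in>{n0..N}. a i * a j * Kz T1 (\<zeta> i + \<zeta> j))"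
  have cr: "cmod X \<le> (1 + exp (2*\<eta>*T1)) * (T1/pi) / q0\<^sup>2 / (2 * (2 * real P - 1)) * A"
    unfolding X_def A_def by (rule fam_cross[where l=\<zeta> and p=n0 and H=\<eta> and g=g and a=a and N=N and P=P, OF T q0 g1 gz iz P(1) st])
  have d1: "(1 + exp (2*\<eta>*T1)) * (T1/pi) / q0\<^sup>2 / (2 * (2 * real P - 1)) = (T1/pi) * ((1 + exp x) * (1/q0\<^sup>2) / (2 * (2 * real P - 1)))"
    unfolding x_def using q0 by (simp add: field_simps)
  have d2: "(1 + exp x) * (1/q0\<^sup>2) / (2 * (2 * real P - 1)) \<le> \<delta>/4"
  proof -
    have Pp: "2 * real P - 1 > 0" using P by simp
    have "(1 + exp x) * (1/q0\<^sup>2) \<le> 3 * 1"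
      using e1 xh iq iq0 by (intro mult_mono) auto
    then have "(1 + exp x) * (1/q0\<^sup>2) / (2 * (2 * real P - 1)) \<le> 3 / (2 * (2 * real P - 1))"
      using Pp by (intro divide_right_mono) auto
    also have "\<dots> \<le> 3 / (2 * (8/\<delta>))" using P Pp \<delta> by (intro divide_left_mono) auto
    also have "\<dots> = 3/16 * \<delta>" using \<delta> by (simp add: field_simps)
    finally have "(1 + exp x) * (1/q0\<^sup>2) / (2 * (2 * real P - 1)) \<le> 3/16 * \<delta>" .
    then show ?thesis using \<delta> by linarith
  qed
  have "(T1/pi) * ((1 + exp x) * (1/q0\<^sup>2) / (2 * (2 * real P - 1))) \<le> (T1/pi) * (\<delta>/4)"
    using d2 T by (intro mult_left_mono) auto
  then have m1: "(T1/pi) * ((1 + exp x) * (1/q0\<^sup>2) / (2 * (2 * real P - 1))) * A \<le> (T1/pi) * (\<delta>/4) * A"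
    using A0 by (rule mult_right_mono)
  have m2: "(T1/pi) * (\<delta>/4) * A = Y/4" unfolding Y_def by simp
  have m3: "cmod X \<le> (T1/pi) * ((1 + exp x) * (1/q0\<^sup>2) / (2 * (2 * real P - 1))) * A"
    using cr unfolding d1 .
  have "cmod X \<le> Y/4" using m1 m2 m3 by linarith
  then have cr': "- (Y/4) \<le> Re X" using abs_Re_le_cmod[of X] by linarith
  have QF: "Qf T1 F = 2 * Qf T1 fz + 2 * Re X"
    unfolding F_def fz_def X_def by (rule Q_re2[OF T])
  have QF': "Qf T1 F \<ge> 5/2 * Y" using QF lowz' cr' by linarith
  have ee: "exp (2*Hw*T1) \<le> exp (4*Hw*Tm)"
  proof -
    have "2*Hw*T1 \<le> 2*Hw*(2*Tm)" using Hw T1 by (intro mult_left_mono) auto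
    then show ?thesis by simp
  qed
  have U1: "T1 * exp (2*Hw*T1) + (1 + exp (2*Hw*T1)) * (T1/pi) / q0\<^sup>2 \<le> U0"
  proof -
    have "T1 * exp (2*Hw*T1) \<le> 2*Tm * exp (4*Hw*Tm)" using T1 ee by (intro mult_mono) auto
    moreover have "(1 + exp (2*Hw*T1)) * (T1/pi) / q0\<^sup>2 \<le> (1 + exp (4*Hw*Tm)) * (2*Tm/pi)"
    proof -
      have z0: "0 \<le> (1 + exp (2*Hw*T1)) * (T1/pi)" using T by (simp add: add_nonneg_nonneg)
      have "(1 + exp (2*Hw*T1)) * (T1/pi) / q0\<^sup>2 \<le> (1 + exp (2*Hw*T1)) * (T1/pi) / 1"
        using q0 z0 by (intro divide_left_mono) (auto simp: one_le_power)
      also have "\<dots> \<le> (1 + exp (4*Hw*Tm)) * (2*Tm/pi)"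
        using ee T1 by (auto intro!: mult_mono divide_right_mono)
      finally show ?thesis .
    qed
    ultimately show ?thesis unfolding U0 by linarith
  qed
  have U00: "0 \<le> U0" unfolding U0 using T1 by (simp add: add_nonneg_nonneg)
  have bA: "(\<Sum>n\<in>{n0..N}. (cmod (b n))\<^sup>2) \<le> Kw * A"
    unfolding A_def sum_distrib_left b_def a_def using cw by (intro sum_mono) auto
  have "Qf T1 fw \<le> (T1 * exp (2*Hw*T1) + (1 + exp (2*Hw*T1)) * (T1/pi) / q0\<^sup>2) * (\<Sum>n\<in>{n0..N}. (cmod (b n))\<^sup>2)"
    unfolding fw_def by (rule fam(1)[where l=\<omega> and p=n0 and H=Hw and g=g and a=b and N=N, OF T q0 g1 gw iw])
  also have "\<dots> \<le> U0 * (Kw * A)"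
    using U1 bA U00 by (intro mult_mono) (auto simp: sum_nonneg)
  finally have Qfw: "Qf T1 fw \<le> U0 * (Kw * A)" .
  have QG: "Qf T1 G \<le> 4 * Qf T1 fw"
    unfolding G_def by (rule Q_le1[OF T cG[unfolded G_def] cfw]) (rule pw_re4)
  have QFu: "Qf T1 F \<le> 2 * Qf T1 (u2_partial \<omega> \<zeta> c d C D n0 N) + 2 * Qf T1 G"
  proof (rule Q_le2[OF T cF cu cG])
    fix t
    have "F t = u2_partial \<omega> \<zeta> c d C D n0 N t + (- G t)" using u2[of t] by simp
    then show "(cmod (F t))\<^sup>2 \<le> 2 * (cmod (u2_partial \<omega> \<zeta> c d C D n0 N t))\<^sup>2 + 2 * (cmod (G t))\<^sup>2"
      using pw_2[of "u2_partial \<omega> \<zeta> c d C D n0 N t" "- G t"] by simp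
  qed
  define V where "V = (Tm/pi) * \<delta> * A"
  define Z where "Z = U0 * (Kw * A)"
  have k1: "4 * U0 * Kw * A \<le> (Tm/pi) * (\<delta>/4) * A"
    using Kw(2) A0 by (rule mult_right_mono)
  have k1': "4 * Z \<le> V / 4" using k1 unfolding Z_def V_def by (simp add: mult.assoc mult.left_commute)
  have k2: "V \<le> Y"
    unfolding Y_def V_def using T1 \<delta> A0 by (intro mult_right_mono mult_left_mono divide_right_mono) auto
  have "Qf T1 (u2_partial \<omega> \<zeta> c d C D n0 N) \<ge> V"
    using QFu QF' QG Qfw[folded Z_def] k1' k2 by linarith
  then have "Qf T1 (u2_partial \<omega> \<zeta> c d C D n0 N) \<ge> (Tm/pi) * \<delta> * A" unfolding V_def .
  then show ?thesis unfolding A_def a_def .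
qed



lemma upper_u:
  fixes \<omega> \<zeta> c d C D :: "nat \<Rightarrow> complex" and r R s :: "nat \<Rightarrow> real"
  assumes T: "T > 0" and q0: "q0 \<ge> 1" and g: "g \<ge> 2*q0*(pi/T)"
    and gz: "\<And>n. n \<ge> n0 \<Longrightarrow> Re (\<zeta> (Suc n)) - Re (\<zeta> n) \<ge> g"
    and gw: "\<And>n. n \<ge> n0 \<Longrightarrow> Re (\<omega> (Suc n)) - Re (\<omega> n) \<ge> g"
    and iz: "\<And>n. n \<ge> n0 \<Longrightarrow> \<bar>Im (\<zeta> n)\<bar> \<le> Hz"
    and iw: "\<And>n. n \<ge> n0 \<Longrightarrow> \<bar>Im (\<omega> n)\<bar> \<le> Hw"
    and p: "p \<ge> n0"
    and hC: "\<And>n. n \<ge> n0 \<Longrightarrow> (cmod (C n))\<^sup>2 \<le> s n"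
    and hD: "\<And>n. n \<ge> n0 \<Longrightarrow> (cmod (D n))\<^sup>2 \<le> KD * s n"
    and hdD: "\<And>n. n \<ge> n0 \<Longrightarrow> (cmod (d n * D n))\<^sup>2 \<le> s n"
    and hcC: "\<And>n. n \<ge> n0 \<Longrightarrow> (cmod (c n * C n))\<^sup>2 \<le> KC * s n"
    and hr: "\<And>n. \<bar>r n\<bar> \<le> \<rho>"
    and Uz: "Uz = T * exp (2*Hz*T) + (1 + exp (2*Hz*T)) * (T/pi) / q0\<^sup>2"
    and Uw: "Uw = T * exp (2*Hw*T) + (1 + exp (2*Hw*T)) * (T/pi) / q0\<^sup>2"
  shows "Qf T (u2_partial \<omega> \<zeta> c d C D p M) \<le> (8*Uz + 8*Uw*KC) * (\<Sum>n\<in>{p..M}. s n)"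
    and "Qf T (u1_partial \<omega> \<zeta> r C D R p M) \<le> (12*Uw + 12*Uz*KD) * (\<Sum>n\<in>{p..M}. s n)
            + 3 * (exp (\<rho>*T))\<^sup>2 * (2*T/pi) * (\<Sum>n\<in>{p..M}. \<bar>R n\<bar>)\<^sup>2"
proof -
  have gz': "\<And>n. n \<ge> p \<Longrightarrow> Re (\<zeta> (Suc n)) - Re (\<zeta> n) \<ge> g" using gz p by auto
  have gw': "\<And>n. n \<ge> p \<Longrightarrow> Re (\<omega> (Suc n)) - Re (\<omega> n) \<ge> g" using gw p by auto
  have iz': "\<And>n. n \<ge> p \<Longrightarrow> \<bar>Im (\<zeta> n)\<bar> \<le> Hz" using iz p by auto
  have iw': "\<And>n. n \<ge> p \<Longrightarrow> \<bar>Im (\<omega> n)\<bar> \<le> Hw" using iw p by auto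
  have Uz0: "Uz \<ge> 0" unfolding Uz using T by (simp add: add_nonneg_nonneg)
  have Uw0: "Uw \<ge> 0" unfolding Uw using T by (simp add: add_nonneg_nonneg)
  have s0: "n \<ge> n0 \<Longrightarrow> 0 \<le> s n" for n using hC[of n] by (smt (verit) zero_le_power2)
  have S0: "0 \<le> (\<Sum>n\<in>{p..M}. s n)" using p s0 by (intro sum_nonneg) auto
  define fz where "fz t = (\<Sum>n\<in>{p..M}. (d n * D n) * exp (\<i> * \<zeta> n * of_real t))" for t :: real
  define fw where "fw t = (\<Sum>n\<in>{p..M}. (c n * C n) * exp (\<i> * \<omega> n * of_real t))" for t :: real
  define X where "X t = (\<Sum>n\<in>{p..M}. C n * exp (\<i> * \<omega> n * of_real t))" for t :: real
  define Y where "Y t = (\<Sum>n\<in>{p..M}. D n * exp (\<i> * \<zeta> n * of_real t))" for t :: real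
  define Rs where "Rs t = (\<Sum>n\<in>{p..M}. complex_of_real (R n * exp (r n * t)))" for t :: real
  have cfz: "continuous_on {0..T} fz" unfolding fz_def by (intro continuous_intros)
  have cfw: "continuous_on {0..T} fw" unfolding fw_def by (intro continuous_intros)
  have cX: "continuous_on {0..T} X" unfolding X_def by (intro continuous_intros)
  have cY: "continuous_on {0..T} Y" unfolding Y_def by (intro continuous_intros)
  have cR: "continuous_on {0..T} Rs" unfolding Rs_def by (intro continuous_intros)
  have cu2: "continuous_on {0..T} (u2_partial \<omega> \<zeta> c d C D p M)" unfolding u2_partial_def by (intro continuous_intros)
  have cu1: "continuous_on {0..T} (u1_partial \<omega> \<zeta> r C D R p M)" unfolding u1_partial_def by (intro continuous_intros)
  have Qfz: "Qf T fz \<le> Uz * (\<Sum>n\<in>{p..M}. s n)"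
  proof -
    have "Qf T fz \<le> Uz * (\<Sum>n\<in>{p..M}. (cmod (d n * D n))\<^sup>2)"
      unfolding fz_def Uz by (rule fam(1)[where l=\<zeta> and p=p and H=Hz and g=g and a="\<lambda>n. d n * D n" and N=M, OF T q0 g gz' iz'])
    also have "\<dots> \<le> Uz * (\<Sum>n\<in>{p..M}. s n)" using hdD p Uz0 by (intro mult_left_mono sum_mono) auto
    finally show ?thesis .
  qed
  have Qfw: "Qf T fw \<le> Uw * KC * (\<Sum>n\<in>{p..M}. s n)"
  proof -
    have "Qf T fw \<le> Uw * (\<Sum>n\<in>{p..M}. (cmod (c n * C n))\<^sup>2)"
      unfolding fw_def Uw by (rule fam(1)[where l=\<omega> and p=p and H=Hw and g=g and a="\<lambda>n. c n * C n" and N=M, OF T q0 g gw' iw'])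
    also have "\<dots> \<le> Uw * (\<Sum>n\<in>{p..M}. KC * s n)" using hcC p Uw0 by (intro mult_left_mono sum_mono) auto
    finally show ?thesis by (simp add: sum_distrib_left mult.assoc)
  qed
  have QX: "Qf T X \<le> Uw * (\<Sum>n\<in>{p..M}. s n)"
  proof -
    have "Qf T X \<le> Uw * (\<Sum>n\<in>{p..M}. (cmod (C n))\<^sup>2)"
      unfolding X_def Uw by (rule fam(1)[where l=\<omega> and p=p and H=Hw and g=g and a=C and N=M, OF T q0 g gw' iw'])
    also have "\<dots> \<le> Uw * (\<Sum>n\<in>{p..M}. s n)" using hC p Uw0 by (intro mult_left_mono sum_mono) auto
    finally show ?thesis .
  qed
  have QY: "Qf T Y \<le> Uz * KD * (\<Sum>n\<in>{p..M}. s n)"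
  proof -
    have "Qf T Y \<le> Uz * (\<Sum>n\<in>{p..M}. (cmod (D n))\<^sup>2)"
      unfolding Y_def Uz by (rule fam(1)[where l=\<zeta> and p=p and H=Hz and g=g and a=D and N=M, OF T q0 g gz' iz'])
    also have "\<dots> \<le> Uz * (\<Sum>n\<in>{p..M}. KD * s n)" using hD p Uz0 by (intro mult_left_mono sum_mono) auto
    finally show ?thesis by (simp add: sum_distrib_left mult.assoc)
  qed
  define c0 where "c0 = (\<Sum>n\<in>{p..M}. \<bar>R n\<bar>) * exp (\<rho>*T)"
  have QR: "Qf T Rs \<le> 1 * Qf T (\<lambda>t. of_real c0)"
  proof (rule Q_le1[OF T cR])
    show "continuous_on {0..T} (\<lambda>t. complex_of_real c0)" by (intro continuous_intros)
    fix t assume t: "t \<in> {0..T}"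
    have "cmod (Rs t) \<le> (\<Sum>n\<in>{p..M}. cmod (complex_of_real (R n * exp (r n * t))))"
      unfolding Rs_def by (rule norm_sum)
    also have "\<dots> \<le> (\<Sum>n\<in>{p..M}. \<bar>R n\<bar> * exp (\<rho>*T))"
    proof (intro sum_mono)
      fix n
      have "r n * t \<le> \<rho> * T"
      proof -
        have "r n * t \<le> \<bar>r n\<bar> * t" using t by (intro mult_right_mono) auto
        also have "\<dots> \<le> \<rho> * T" using t hr[of n] by (intro mult_mono) auto
        finally show ?thesis .
      qed
      then have "\<bar>R n\<bar> * exp (r n * t) \<le> \<bar>R n\<bar> * exp (\<rho>*T)" by (intro mult_left_mono) auto
      moreover have "cmod (complex_of_real (R n * exp (r n * t))) = \<bar>R n\<bar> * exp (r n * t)"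
        by (simp only: norm_of_real abs_mult) simp
      ultimately show "cmod (complex_of_real (R n * exp (r n * t))) \<le> \<bar>R n\<bar> * exp (\<rho>*T)" by simp
    qed
    also have "\<dots> = c0" unfolding c0_def by (simp add: sum_distrib_right)
    finally have "cmod (Rs t) \<le> c0" .
    then have "(cmod (Rs t))\<^sup>2 \<le> c0\<^sup>2" by (intro power_mono) auto
    then show "(cmod (Rs t))\<^sup>2 \<le> 1 * (cmod (complex_of_real c0))\<^sup>2" by simp
  qed
  have QR': "Qf T Rs \<le> (exp (\<rho>*T))\<^sup>2 * (2*T/pi) * (\<Sum>n\<in>{p..M}. \<bar>R n\<bar>)\<^sup>2"
    using QR Q_const[OF T, of c0] unfolding c0_def by (simp add: power_mult_distrib algebra_simps)
  show "Qf T (u2_partial \<omega> \<zeta> c d C D p M) \<le> (8*Uz + 8*Uw*KC) * (\<Sum>n\<in>{p..M}. s n)"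
  proof -
    have cF: "continuous_on {0..T} (\<lambda>t. fz t + cnj (fz t))" by (intro continuous_intros cfz)
    have cG: "continuous_on {0..T} (\<lambda>t. fw t + cnj (fw t))" by (intro continuous_intros cfw)
    have "Qf T (u2_partial \<omega> \<zeta> c d C D p M) \<le> 2 * Qf T (\<lambda>t. fz t + cnj (fz t)) + 2 * Qf T (\<lambda>t. fw t + cnj (fw t))"
      by (rule Q_le2[OF T cu2 cF cG]) (simp add: u2_dec fz_def fw_def pw_2)
    moreover have "Qf T (\<lambda>t. fz t + cnj (fz t)) \<le> 4 * Qf T fz" by (rule Q_le1[OF T cF cfz]) (rule pw_re4)
    moreover have "Qf T (\<lambda>t. fw t + cnj (fw t)) \<le> 4 * Qf T fw" by (rule Q_le1[OF T cG cfw]) (rule pw_re4)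
    ultimately show ?thesis using Qfz Qfw by (simp add: algebra_simps)
  qed
  show "Qf T (u1_partial \<omega> \<zeta> r C D R p M) \<le> (12*Uw + 12*Uz*KD) * (\<Sum>n\<in>{p..M}. s n)
            + 3 * (exp (\<rho>*T))\<^sup>2 * (2*T/pi) * (\<Sum>n\<in>{p..M}. \<bar>R n\<bar>)\<^sup>2"
  proof -
    have "Qf T (u1_partial \<omega> \<zeta> r C D R p M) \<le> 12 * Qf T X + 3 * Qf T Rs + 12 * Qf T Y"
    proof (rule Q_le3[OF T cu1 cX cR cY])
      fix t
      have "(cmod (u1_partial \<omega> \<zeta> r C D R p M t))\<^sup>2 \<le> 3 * (cmod (X t + cnj (X t)))\<^sup>2 + 3 * (cmod (Rs t))\<^sup>2 + 3 * (cmod (Y t + cnj (Y t)))\<^sup>2"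
        unfolding u1_dec X_def Y_def Rs_def by (rule pw_3)
      moreover have "(cmod (X t + cnj (X t)))\<^sup>2 \<le> 4 * (cmod (X t))\<^sup>2" by (rule pw_re4)
      moreover have "(cmod (Y t + cnj (Y t)))\<^sup>2 \<le> 4 * (cmod (Y t))\<^sup>2" by (rule pw_re4)
      ultimately show "(cmod (u1_partial \<omega> \<zeta> r C D R p M t))\<^sup>2 \<le> 12 * (cmod (X t))\<^sup>2 + 3 * (cmod (Rs t))\<^sup>2 + 12 * (cmod (Y t))\<^sup>2"
        by linarith
    qed
    moreover have "(12*Uw + 12*Uz*KD) * (\<Sum>n\<in>{p..M}. s n) + 3 * (exp (\<rho>*T))\<^sup>2 * (2*T/pi) * (\<Sum>n\<in>{p..M}. \<bar>R n\<bar>)\<^sup>2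
       = 12 * (Uw * (\<Sum>n\<in>{p..M}. s n)) + 12 * (Uz * KD * (\<Sum>n\<in>{p..M}. s n)) + 3 * ((exp (\<rho>*T))\<^sup>2 * (2*T/pi) * (\<Sum>n\<in>{p..M}. \<bar>R n\<bar>)\<^sup>2)"
      by (simp add: algebra_simps)
    ultimately show ?thesis using QX QY QR' by linarith
  qed
qed



lemma tail_small:
  fixes f :: "nat \<Rightarrow> real"
  assumes "summable f" "e > 0"
  shows "\<exists>N0. \<forall>N\<ge>N0. \<forall>M. sum f {Suc N..M} < e"
proof -
  obtain N0 where N0: "\<forall>m\<ge>N0. \<forall>n. norm (sum f {m..<n}) < e" using assms summable_Cauchy by blast
  have "sum f {Suc N..M} < e" if "N \<ge> N0" for N M
  proof -
    have "sum f {Suc N..M} = sum f {Suc N..<Suc M}" by (simp add: atLeastLessThanSuc_atLeastAtMost)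
    also have "\<dots> \<le> norm (sum f {Suc N..<Suc M})" by simp
    also have "\<dots> < e" by (rule N0[rule_format]) (use that in simp)
    finally show ?thesis .
  qed
  then show ?thesis by blast
qed

lemma conv_energy:
  fixes \<omega> \<zeta> c d C D :: "nat \<Rightarrow> complex" and r R s :: "nat \<Rightarrow> real"
  assumes T: "T > 0"
    and b1: "\<And>p M. p \<ge> n0 \<Longrightarrow> Qf T (u1_partial \<omega> \<zeta> r C D R p M) \<le> K1 * (\<Sum>n\<in>{p..M}. s n) + K3 * (\<Sum>n\<in>{p..M}. \<bar>R n\<bar>)\<^sup>2"
    and b2: "\<And>p M. p \<ge> n0 \<Longrightarrow> Qf T (u2_partial \<omega> \<zeta> c d C D p M) \<le> K2 * (\<Sum>n\<in>{p..M}. s n)"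
    and ss: "summable s" and sR: "summable (\<lambda>n. \<bar>R n\<bar>)"
    and K: "K1 \<ge> 0" "K2 \<ge> 0" "K3 \<ge> 0"
  shows "convergent (\<lambda>N. energy_partial \<omega> \<zeta> c d r C D R T n0 N)"
proof -
  have small: "\<exists>N0. \<forall>N\<ge>N0. \<forall>M. (\<Sum>n\<in>{Suc N..M}. s n) < e' \<and> (\<Sum>n\<in>{Suc N..M}. \<bar>R n\<bar>) < e'" if e0: "e' > 0" for e'
  proof -
    obtain N1 where N1: "\<forall>N\<ge>N1. \<forall>M. sum s {Suc N..M} < e'" using tail_small[OF ss e0] by blast
    obtain N2 where N2: "\<forall>N\<ge>N2. \<forall>M. sum (\<lambda>n. \<bar>R n\<bar>) {Suc N..M} < e'" using tail_small[OF sR e0] by blast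
    show ?thesis using N1 N2 by (intro exI[of _ "max N1 N2"]) auto
  qed
  have c1: "convergent (\<lambda>N. Qf T (u1_partial \<omega> \<zeta> r C D R n0 N))"
  proof (rule Q_conv[OF T])
    show "continuous_on {0..T} (u1_partial \<omega> \<zeta> r C D R n0 N)" for N unfolding u1_partial_def by (intro continuous_intros)
    fix e :: real assume e: "e > 0"
    define e' where "e' = min 1 (e / (K1 + K3 + 1))"
    have e'0: "e' > 0" unfolding e'_def using e K by simp
    obtain N0 where N0: "\<forall>N\<ge>N0. \<forall>M. (\<Sum>n\<in>{Suc N..M}. s n) < e' \<and> (\<Sum>n\<in>{Suc N..M}. \<bar>R n\<bar>) < e'"
      using small[OF e'0] by blast
    show "\<exists>N0. \<forall>N\<ge>N0. \<forall>M\<ge>N. Qf T (\<lambda>t. u1_partial \<omega> \<zeta> r C D R n0 M t - u1_partial \<omega> \<zeta> r C D R n0 N t) \<le> e"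
    proof (intro exI[of _ "max N0 n0"] allI impI)
      fix N M assume NM: "max N0 n0 \<le> N" "N \<le> M"
      have "Qf T (\<lambda>t. u1_partial \<omega> \<zeta> r C D R n0 M t - u1_partial \<omega> \<zeta> r C D R n0 N t) = Qf T (u1_partial \<omega> \<zeta> r C D R (Suc N) M)"
        using u1_diff[of n0 N M] NM by (simp add: fun_eq_iff)
      also have "\<dots> \<le> K1 * (\<Sum>n\<in>{Suc N..M}. s n) + K3 * (\<Sum>n\<in>{Suc N..M}. \<bar>R n\<bar>)\<^sup>2" using b1 NM by auto
      also have "\<dots> \<le> K1 * e' + K3 * e'"
      proof (intro add_mono mult_left_mono)
        show "(\<Sum>n\<in>{Suc N..M}. s n) \<le> e'" using N0 NM by (auto intro: less_imp_le)
        have r1: "0 \<le> (\<Sum>n\<in>{Suc N..M}. \<bar>R n\<bar>)" by (simp add: sum_nonneg)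
        have r2: "(\<Sum>n\<in>{Suc N..M}. \<bar>R n\<bar>) \<le> e'" using N0 NM by (auto intro: less_imp_le)
        have "(\<Sum>n\<in>{Suc N..M}. \<bar>R n\<bar>)\<^sup>2 \<le> e'\<^sup>2" using r2 r1 by (rule power_mono)
        also have "e'\<^sup>2 \<le> e'"
        proof -
          have "e' \<le> 1" unfolding e'_def by simp
          then show ?thesis using e'0 mult_left_le_one_le[of e' e'] by (simp add: power2_eq_square)
        qed
        finally show "(\<Sum>n\<in>{Suc N..M}. \<bar>R n\<bar>)\<^sup>2 \<le> e'" .
      qed (use K in auto)
      also have "\<dots> \<le> e"
      proof -
        have "e' \<le> e / (K1 + K3 + 1)" unfolding e'_def by simp
        then have "(K1 + K3 + 1) * e' \<le> e" using K by (simp add: field_simps)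
        then show ?thesis using e'0 by (simp add: algebra_simps)
      qed
      finally show "Qf T (\<lambda>t. u1_partial \<omega> \<zeta> r C D R n0 M t - u1_partial \<omega> \<zeta> r C D R n0 N t) \<le> e" .
    qed
  qed
  have c2: "convergent (\<lambda>N. Qf T (u2_partial \<omega> \<zeta> c d C D n0 N))"
  proof (rule Q_conv[OF T])
    show "continuous_on {0..T} (u2_partial \<omega> \<zeta> c d C D n0 N)" for N unfolding u2_partial_def by (intro continuous_intros)
    fix e :: real assume e: "e > 0"
    define e' where "e' = e / (K2 + 1)"
    have e'0: "e' > 0" unfolding e'_def using e K by simp
    obtain N0 where N0: "\<forall>N\<ge>N0. \<forall>M. (\<Sum>n\<in>{Suc N..M}. s n) < e' \<and> (\<Sum>n\<in>{Suc N..M}. \<bar>R n\<bar>) < e'"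
      using small[OF e'0] by blast
    show "\<exists>N0. \<forall>N\<ge>N0. \<forall>M\<ge>N. Qf T (\<lambda>t. u2_partial \<omega> \<zeta> c d C D n0 M t - u2_partial \<omega> \<zeta> c d C D n0 N t) \<le> e"
    proof (intro exI[of _ "max N0 n0"] allI impI)
      fix N M assume NM: "max N0 n0 \<le> N" "N \<le> M"
      have "Qf T (\<lambda>t. u2_partial \<omega> \<zeta> c d C D n0 M t - u2_partial \<omega> \<zeta> c d C D n0 N t) = Qf T (u2_partial \<omega> \<zeta> c d C D (Suc N) M)"
        using u2_diff[of n0 N M] NM by (simp add: fun_eq_iff)
      also have "\<dots> \<le> K2 * (\<Sum>n\<in>{Suc N..M}. s n)" using b2 NM by auto
      also have "\<dots> \<le> K2 * e'" using N0 NM K by (intro mult_left_mono) (auto intro: less_imp_le)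
      also have "\<dots> \<le> e" unfolding e'_def using K e by (simp add: field_simps)
      finally show "Qf T (\<lambda>t. u2_partial \<omega> \<zeta> c d C D n0 M t - u2_partial \<omega> \<zeta> c d C D n0 N t) \<le> e" .
    qed
  qed
  have "convergent (\<lambda>N. Qf T (u1_partial \<omega> \<zeta> r C D R n0 N) + Qf T (u2_partial \<omega> \<zeta> c d C D n0 N))"
    using c1 c2 by (rule convergent_add)
  then show ?thesis using energy_eq[OF T] by simp
qed



lemma gap_ev:
  assumes "liminf (\<lambda>n. ereal (f n)) = ereal \<gamma>" "g < \<gamma>"
  shows "eventually (\<lambda>n. f n > g) sequentially"
proof -
  have "ereal g < liminf (\<lambda>n. ereal (f n))" using assms by simp
  from less_LiminfD[OF this] show ?thesis by simp
qed

lemma grow_ev: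
  fixes x :: "nat \<Rightarrow> real"
  assumes g: "g > 0" and gap: "\<And>n. n \<ge> N \<Longrightarrow> x (Suc n) - x n \<ge> g"
  shows "eventually (\<lambda>n. x n \<ge> K) sequentially"
proof -
  define N' where "N' = N + nat \<lceil>(K - x N)/g\<rceil>"
  have "x n \<ge> K" if n: "n \<ge> N'" for n
  proof -
    have nN: "n \<ge> N" using n unfolding N'_def by simp
    have "x n - x N \<ge> g * (real n - real N)" by (rule sep[where x=x and g=g and p=N, OF gap _ nN]) auto
    moreover have "real n - real N \<ge> (K - x N)/g"
    proof -
      have "real n - real N \<ge> real (nat \<lceil>(K - x N)/g\<rceil>)" using n unfolding N'_def by simp
      moreover have "real (nat \<lceil>(K - x N)/g\<rceil>) \<ge> (K - x N)/g" by linarith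
      ultimately show ?thesis by linarith
    qed
    then have "g * (real n - real N) \<ge> g * ((K - x N)/g)" using g by (intro mult_left_mono) auto
    then have "g * (real n - real N) \<ge> K - x N" using g by simp
    ultimately show ?thesis by linarith
  qed
  then show ?thesis unfolding eventually_sequentially by blast
qed

lemma psum_lim:
  fixes s :: "nat \<Rightarrow> real"
  assumes "summable s"
  shows "(\<lambda>N. \<Sum>n\<in>{n0..N}. s n) \<longlonglongrightarrow> (\<Sum>n. s (n + n0))"
proof -
  have "(\<lambda>N. (\<Sum>i\<le>N. s i) - (\<Sum>i<n0. s i)) \<longlonglongrightarrow> suminf s - (\<Sum>i<n0. s i)"
    by (intro tendsto_diff summable_LIMSEQ' assms tendsto_const)
  moreover have "suminf s - (\<Sum>i<n0. s i) = (\<Sum>n. s (n + n0))"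
    using suminf_split_initial_segment[OF assms, of n0] by simp
  moreover have "eventually (\<lambda>N. (\<Sum>i\<le>N. s i) - (\<Sum>i<n0. s i) = (\<Sum>n\<in>{n0..N}. s n)) sequentially"
    unfolding eventually_sequentially
  proof (intro exI[of _ n0] allI impI)
    fix N assume N: "n0 \<le> N"
    have "{..N} = {..<n0} \<union> {n0..N}" using N by auto
    then have "(\<Sum>i\<le>N. s i) = (\<Sum>i<n0. s i) + (\<Sum>n\<in>{n0..N}. s n)"
      by (simp add: sum.union_disjoint ivl_disj_int)
    then show "(\<Sum>i\<le>N. s i) - (\<Sum>i<n0. s i) = (\<Sum>n\<in>{n0..N}. s n)" by simp
  qed
  ultimately show ?thesis using Lim_transform_eventually by metis
qed

lemma summable_R:
  fixes R s :: "nat \<Rightarrow> real"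
  assumes \<mu>: "\<mu> > 0" and \<nu>: "\<nu> > 1/2" and ss: "summable s" and s0: "\<And>n. s n \<ge> 0"
    and hR: "\<forall>n. 1 \<le> n \<and> n' \<le> n \<longrightarrow> \<bar>R n\<bar> \<le> \<mu> * real n powr (-\<nu>) * sqrt (s n)"
  shows "summable (\<lambda>n. \<bar>R n\<bar>)"
proof -
  have sp: "summable (\<lambda>n. real n powr (-2*\<nu>))" using \<nu> by (subst summable_real_powr_iff) simp
  have sg: "summable (\<lambda>n. \<mu>/2 * (real n powr (-2*\<nu>) + s n))"
    by (intro summable_mult summable_add sp ss)
  show ?thesis
  proof (rule summable_comparison_test'[OF sg, of "max 1 n'"])
    fix n assume n: "n \<ge> max 1 n'"
    have "\<bar>R n\<bar> \<le> \<mu> * (real n powr (-\<nu>) * sqrt (s n))" using hR n by (simp add: mult.assoc)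
    also have "\<dots> \<le> \<mu> * ((real n powr (-2*\<nu>) + s n)/2)"
    proof (rule mult_left_mono)
      have "0 \<le> (real n powr (-\<nu>) - sqrt (s n))\<^sup>2" by simp
      moreover have "(real n powr (-\<nu>))\<^sup>2 = real n powr (-2*\<nu>)"
        by (simp add: power2_eq_square powr_add[symmetric])
      moreover have "(sqrt (s n))\<^sup>2 = s n" using s0 by simp
      ultimately show "real n powr (-\<nu>) * sqrt (s n) \<le> (real n powr (-2*\<nu>) + s n)/2"
        by (simp add: power2_eq_square algebra_simps)
    qed (use \<mu> in simp)
    finally show "norm \<bar>R n\<bar> \<le> \<mu>/2 * (real n powr (-2*\<nu>) + s n)" by simp
  qed
qed



theorem theorem5p10:
  fixes \<omega> \<zeta> c d :: "nat \<Rightarrow> complex" and r :: "nat \<Rightarrow> real"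
    and \<gamma> \<alpha> \<kappa> \<mu> \<nu> M c1 c2 :: real and n' :: nat
  assumes const: "\<gamma> > 0" "\<alpha> > 0" "\<kappa> < 0" "\<mu> > 0" "\<nu> > 1/2" "M > 0" "0 < c1" "c1 \<le> c2"
    and H1: "liminf (\<lambda>n. ereal (Re (\<omega> (Suc n)) - Re (\<omega> n))) = ereal \<gamma>"
            "liminf (\<lambda>n. ereal (Re (\<zeta> (Suc n)) - Re (\<zeta> n))) = ereal \<gamma>"
    and H2: "(\<lambda>n. Im (\<omega> n)) \<longlonglongrightarrow> \<alpha>" "r \<longlonglongrightarrow> \<kappa>" "(\<lambda>n. Im (\<zeta> n)) \<longlonglongrightarrow> 0"
    and H3: "\<And>n. n \<ge> 1 \<Longrightarrow> \<omega> n \<noteq> 0"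
            "\<And>n. n \<ge> 1 \<Longrightarrow> \<zeta> n \<noteq> 0"
            "\<And>n. n \<ge> 1 \<Longrightarrow> c1 * cmod (\<zeta> n) \<le> cmod (d n) \<and> cmod (d n) \<le> c2 * cmod (\<zeta> n)"
            "\<And>n. n \<ge> 1 \<Longrightarrow> cmod (c n) \<le> M / cmod (\<omega> n)"
  shows "\<forall>\<epsilon>::real. 0 < \<epsilon> \<and> \<epsilon> < 1 \<longrightarrow>
          (\<exists>n0::nat. n0 \<ge> 1 \<and>
            (\<forall>T::real. T > 2 * pi / (\<gamma> * sqrt (1 - \<epsilon>)) \<longrightarrow>
              (\<exists>cT::real. cT > 0 \<and>
                (\<forall>(C::nat \<Rightarrow> complex) (D::nat \<Rightarrow> complex) (R::nat \<Rightarrow> real).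
                   (\<forall>n. 1 \<le> n \<and> n' \<le> n \<longrightarrow>
                      \<bar>R n\<bar> \<le> \<mu> * real n powr (-\<nu>) * sqrt ((cmod (C n))\<^sup>2 + (cmod (d n * D n))\<^sup>2)) \<longrightarrow>
                   (\<forall>n. 1 \<le> n \<and> n \<le> n' \<longrightarrow>
                      \<bar>R n\<bar> \<le> \<mu> * sqrt ((cmod (C n))\<^sup>2 + (cmod (d n * D n))\<^sup>2)) \<longrightarrow>
                   summable (\<lambda>n. (cmod (C n))\<^sup>2 + (cmod (d n * D n))\<^sup>2) \<longrightarrow>
                   (\<forall>n. 1 \<le> n \<longrightarrow> cmod (C n) \<le> M * cmod (d n * D n)) \<longrightarrow>
                   (\<exists>L. (\<lambda>N. energy_partial \<omega> \<zeta> c d r C D R T n0 N) \<longlonglongrightarrow> L \<and>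
                        cT * (\<Sum>n. (cmod (C (n + n0)))\<^sup>2 + (cmod (d (n + n0) * D (n + n0)))\<^sup>2) \<le> L)))))"
proof (intro allI impI)
  fix \<epsilon> :: real assume \<epsilon>: "0 < \<epsilon> \<and> \<epsilon> < 1"
  define s where "s = sqrt (1 - \<epsilon>)"
  have s: "0 < s" "s < 1" unfolding s_def using \<epsilon> by auto
  define Tm where "Tm = 2 * pi/(\<gamma> * s)"
  define g where "g = \<gamma> * (1+s)/2"
  define q0 where "q0 = (1+s)/(2 * s)"
  define \<delta> where "\<delta> = 1 - 1/q0\<^sup>2"
  have Tm0: "Tm > 0" unfolding Tm_def using s const by simp
  have g0: "g > 0" unfolding g_def using s const by simp
  have g\<gamma>: "g < \<gamma>" unfolding g_def using s const by simp
  have q1: "q0 > 1" unfolding q0_def using s by (simp add: field_simps)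
  have q0: "q0 \<ge> 1" using q1 by simp
  have q2: "q0\<^sup>2 > 1" using q1 by (simp add: one_less_power)
  have \<delta>: "0 < \<delta>" "\<delta> \<le> 1" "1/q0\<^sup>2 \<le> 1 - \<delta>" 
  proof -
    have "1/q0\<^sup>2 < 1" using q2 by (subst divide_less_eq_1_pos) auto
    moreover have "0 < 1/q0\<^sup>2" using q1 by simp
    ultimately show "0 < \<delta>" "\<delta> \<le> 1" "1/q0\<^sup>2 \<le> 1 - \<delta>" unfolding \<delta>_def by auto
  qed
  have gq: "g \<ge> 2 * q0 * (pi/Tm)"
  proof -
    have "2 * q0 * (pi/Tm) = g" unfolding q0_def Tm_def g_def using s const by (simp add: field_simps)
    then show ?thesis by simp
  qed
  define \<eta> where "\<eta> = \<delta>/(32 * Tm)"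
  have \<eta>: "0 < \<eta>" "4 * \<eta> * Tm \<le> \<delta>/8" unfolding \<eta>_def using \<delta> Tm0 by (auto simp: field_simps)
  define Hw where "Hw = \<alpha> + 1"
  have Hw: "0 \<le> Hw" unfolding Hw_def using const by simp
  define U0 where "U0 = 2 * Tm * exp (4 * Hw * Tm) + (1 + exp (4 * Hw * Tm)) * (2 * Tm/pi)"
  have U0: "U0 > 0" unfolding U0_def using Tm0 by (simp add: add_pos_pos)
  define W where "W = 16 * pi * U0 * M^4/(Tm * \<delta>)"
  have W: "W > 0" unfolding W_def using U0 Tm0 \<delta> const by simp
  define Kw where "Kw = M^4/W"
  have Kw: "Kw \<ge> 0" "4 * U0 * Kw \<le> (Tm/pi) * (\<delta>/4)"
  proof -
    show "Kw \<ge> 0" unfolding Kw_def using W by simp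
    have "4 * U0 * Kw = (Tm/pi) * (\<delta>/4)" unfolding Kw_def W_def using U0 Tm0 \<delta> const by (simp add: field_simps)
    then show "4 * U0 * Kw \<le> (Tm/pi) * (\<delta>/4)" by simp
  qed
  define P where "P = nat \<lceil>8/\<delta>\<rceil> + 1"
  have P: "P \<ge> 1" "2 * real P - 1 \<ge> 8/\<delta>"
  proof -
    show "P \<ge> 1" unfolding P_def by simp
    have c: "real_of_int \<lceil>8/\<delta>\<rceil> \<ge> 8/\<delta>" by (rule le_of_int_ceiling)
    have p8: "8/\<delta> > 0" using \<delta> by simp
    then have "real P = real_of_int \<lceil>8/\<delta>\<rceil> + 1" unfolding P_def by simp
    then show "2 * real P - 1 \<ge> 8/\<delta>" using c p8 by linarith
  qed
  define Zb where "Zb = max 1 (g * real P / 2)"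
  define Wb where "Wb = 1 + W"
  obtain \<rho> where \<rho>: "\<rho> > 0" "\<And>n. \<bar>r n\<bar> \<le> \<rho>"
  proof -
    have "Bseq r" using H2(2) by (intro convergent_imp_Bseq) (auto simp: convergent_def)
    then show ?thesis using that by (auto elim!: BseqE)
  qed
  have ev12: "eventually (\<lambda>n. Re (\<omega> (Suc n)) - Re (\<omega> n) > g \<and> Re (\<zeta> (Suc n)) - Re (\<zeta> n) > g) sequentially"
    using gap_ev[OF H1(1) g\<gamma>] gap_ev[OF H1(2) g\<gamma>] by (rule eventually_conj)
  then obtain N1 where N1: "\<And>n. n \<ge> N1 \<Longrightarrow> Re (\<omega> (Suc n)) - Re (\<omega> n) > g \<and> Re (\<zeta> (Suc n)) - Re (\<zeta> n) > g"
    unfolding eventually_sequentially by blast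
  have ev3: "eventually (\<lambda>n. Re (\<zeta> n) \<ge> Zb) sequentially"
    by (rule grow_ev[OF g0, of N1]) (use N1 in \<open>auto intro: less_imp_le\<close>)
  have ev4: "eventually (\<lambda>n. Re (\<omega> n) \<ge> Wb) sequentially"
    by (rule grow_ev[OF g0, of N1]) (use N1 in \<open>auto intro: less_imp_le\<close>)
  have ev5: "eventually (\<lambda>n. dist (Im (\<zeta> n)) 0 < \<eta>) sequentially" by (rule tendstoD[OF H2(3) \<eta>(1)])
  have ev6: "eventually (\<lambda>n. dist (Im (\<omega> n)) \<alpha> < 1) sequentially" by (rule tendstoD[OF H2(1)]) simp
  have "eventually (\<lambda>n. (Re (\<omega> (Suc n)) - Re (\<omega> n) > g \<and> Re (\<zeta> (Suc n)) - Re (\<zeta> n) > g)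
     \<and> Re (\<zeta> n) \<ge> Zb \<and> Re (\<omega> n) \<ge> Wb \<and> dist (Im (\<zeta> n)) 0 < \<eta> \<and> dist (Im (\<omega> n)) \<alpha> < 1) sequentially"
    by (intro eventually_conj ev12 ev3 ev4 ev5 ev6)
  then obtain N0 where N0: "\<And>n. n \<ge> N0 \<Longrightarrow> (Re (\<omega> (Suc n)) - Re (\<omega> n) > g \<and> Re (\<zeta> (Suc n)) - Re (\<zeta> n) > g)
     \<and> Re (\<zeta> n) \<ge> Zb \<and> Re (\<omega> n) \<ge> Wb \<and> dist (Im (\<zeta> n)) 0 < \<eta> \<and> dist (Im (\<omega> n)) \<alpha> < 1"
    unfolding eventually_sequentially by blast
  define n0 where "n0 = max N0 1"
  have n01: "n0 \<ge> 1" unfolding n0_def by simp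
  have nN0: "\<And>n. n \<ge> n0 \<Longrightarrow> n \<ge> N0" unfolding n0_def by simp
  have gw: "\<And>n. n \<ge> n0 \<Longrightarrow> Re (\<omega> (Suc n)) - Re (\<omega> n) \<ge> g" using N0[OF nN0] by (simp add: less_imp_le)
  have gz: "\<And>n. n \<ge> n0 \<Longrightarrow> Re (\<zeta> (Suc n)) - Re (\<zeta> n) \<ge> g" using N0[OF nN0] by (simp add: less_imp_le)
  have Rz: "\<And>n. n \<ge> n0 \<Longrightarrow> Re (\<zeta> n) \<ge> Zb" using N0[OF nN0] by simp
  have Rw: "\<And>n. n \<ge> n0 \<Longrightarrow> Re (\<omega> n) \<ge> Wb" using N0[OF nN0] by simp
  have iz: "\<And>n. n \<ge> n0 \<Longrightarrow> \<bar>Im (\<zeta> n)\<bar> \<le> \<eta>"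
    using N0[OF nN0] unfolding dist_real_def by (simp add: less_imp_le)
  have iw: "\<And>n. n \<ge> n0 \<Longrightarrow> \<bar>Im (\<omega> n)\<bar> \<le> Hw"
  proof -
    fix n assume "n \<ge> n0"
    then have "\<bar>Im (\<omega> n) - \<alpha>\<bar> < 1" using N0[OF nN0] unfolding dist_real_def by simp
    then show "\<bar>Im (\<omega> n)\<bar> \<le> Hw" unfolding Hw_def using const by linarith
  qed
  have st: "2 * Re (\<zeta> n0) \<ge> g * real P" using Rz[of n0] unfolding Zb_def by simp
  have zeta1: "\<And>n. n \<ge> n0 \<Longrightarrow> cmod (\<zeta> n) \<ge> 1"
  proof -
    fix n assume n: "n \<ge> n0"
    have "1 \<le> Zb" unfolding Zb_def by simp
    moreover have "Re (\<zeta> n) \<le> cmod (\<zeta> n)" by (rule complex_Re_le_cmod)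
    ultimately show "cmod (\<zeta> n) \<ge> 1" using Rz[OF n] by linarith
  qed
  have omegaW: "\<And>n. n \<ge> n0 \<Longrightarrow> cmod (\<omega> n) \<ge> Wb"
  proof -
    fix n assume n: "n \<ge> n0"
    have "Re (\<omega> n) \<le> cmod (\<omega> n)" by (rule complex_Re_le_cmod)
    then show "cmod (\<omega> n) \<ge> Wb" using Rw[OF n] by linarith
  qed
  show "\<exists>n0::nat. n0 \<ge> 1 \<and>
            (\<forall>T::real. T > 2 * pi / (\<gamma> * sqrt (1 - \<epsilon>)) \<longrightarrow>
              (\<exists>cT::real. cT > 0 \<and>
                (\<forall>(C::nat \<Rightarrow> complex) (D::nat \<Rightarrow> complex) (R::nat \<Rightarrow> real).
                   (\<forall>n. 1 \<le> n \<and> n' \<le> n \<longrightarrow>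
                      \<bar>R n\<bar> \<le> \<mu> * real n powr (-\<nu>) * sqrt ((cmod (C n))\<^sup>2 + (cmod (d n * D n))\<^sup>2)) \<longrightarrow>
                   (\<forall>n. 1 \<le> n \<and> n \<le> n' \<longrightarrow>
                      \<bar>R n\<bar> \<le> \<mu> * sqrt ((cmod (C n))\<^sup>2 + (cmod (d n * D n))\<^sup>2)) \<longrightarrow>
                   summable (\<lambda>n. (cmod (C n))\<^sup>2 + (cmod (d n * D n))\<^sup>2) \<longrightarrow>
                   (\<forall>n. 1 \<le> n \<longrightarrow> cmod (C n) \<le> M * cmod (d n * D n)) \<longrightarrow>
                   (\<exists>L. (\<lambda>N. energy_partial \<omega> \<zeta> c d r C D R T n0 N) \<longlonglongrightarrow> L \<and>
                        cT * (\<Sum>n. (cmod (C (n + n0)))\<^sup>2 + (cmod (d (n + n0) * D (n + n0)))\<^sup>2) \<le> L))))"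
  proof (intro exI[of _ n0] conjI allI impI)
    show "n0 \<ge> 1" by (rule n01)
    fix T :: real assume "T > 2 * pi / (\<gamma> * sqrt (1 - \<epsilon>))"
    then have TTm: "T > Tm" unfolding Tm_def s_def .
    have T0: "T > 0" using TTm Tm0 by simp
    define T1 where "T1 = min T (2 * Tm)"
    have T1: "Tm \<le> T1" "T1 \<le> 2 * Tm" "0 < T1" "T1 \<le> T" unfolding T1_def using TTm Tm0 by auto
    define cT where "cT = (T1/T) * ((Tm/pi) * \<delta> / (1 + M\<^sup>2))"
    have cT0: "cT > 0"
    proof -
      have "T1/T > 0" using T1 T0 by simp
      moreover have "(Tm/pi) * \<delta> / (1 + M\<^sup>2) > 0" using Tm0 \<delta> by (simp add: add_pos_nonneg)
      ultimately show ?thesis unfolding cT_def by (rule mult_pos_pos)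
    qed
    have gT: "g \<ge> 2 * q0 * (pi/T)"
    proof -
      have "pi/T \<le> pi/Tm" using TTm Tm0 by (intro divide_left_mono) auto
      then have "2 * q0 * (pi/T) \<le> 2 * q0 * (pi/Tm)" using q0 by (intro mult_left_mono) auto
      then show ?thesis using gq by linarith
    qed
    show "\<exists>cT::real. cT > 0 \<and>
                (\<forall>(C::nat \<Rightarrow> complex) (D::nat \<Rightarrow> complex) (R::nat \<Rightarrow> real).
                   (\<forall>n. 1 \<le> n \<and> n' \<le> n \<longrightarrow>
                      \<bar>R n\<bar> \<le> \<mu> * real n powr (-\<nu>) * sqrt ((cmod (C n))\<^sup>2 + (cmod (d n * D n))\<^sup>2)) \<longrightarrow>
                   (\<forall>n. 1 \<le> n \<and> n \<le> n' \<longrightarrow>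
                      \<bar>R n\<bar> \<le> \<mu> * sqrt ((cmod (C n))\<^sup>2 + (cmod (d n * D n))\<^sup>2)) \<longrightarrow>
                   summable (\<lambda>n. (cmod (C n))\<^sup>2 + (cmod (d n * D n))\<^sup>2) \<longrightarrow>
                   (\<forall>n. 1 \<le> n \<longrightarrow> cmod (C n) \<le> M * cmod (d n * D n)) \<longrightarrow>
                   (\<exists>L. (\<lambda>N. energy_partial \<omega> \<zeta> c d r C D R T n0 N) \<longlonglongrightarrow> L \<and>
                        cT * (\<Sum>n. (cmod (C (n + n0)))\<^sup>2 + (cmod (d (n + n0) * D (n + n0)))\<^sup>2) \<le> L))"
    proof (rule exI[of _ cT], intro conjI allI impI)
      show "cT > 0" by (rule cT0)
      fix C D :: "nat \<Rightarrow> complex" and R :: "nat \<Rightarrow> real"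
      assume hR1: "\<forall>n. 1 \<le> n \<and> n' \<le> n \<longrightarrow>
                      \<bar>R n\<bar> \<le> \<mu> * real n powr (-\<nu>) * sqrt ((cmod (C n))\<^sup>2 + (cmod (d n * D n))\<^sup>2)"
        and hR2: "\<forall>n. 1 \<le> n \<and> n \<le> n' \<longrightarrow>
                      \<bar>R n\<bar> \<le> \<mu> * sqrt ((cmod (C n))\<^sup>2 + (cmod (d n * D n))\<^sup>2)"
        and summ: "summable (\<lambda>n. (cmod (C n))\<^sup>2 + (cmod (d n * D n))\<^sup>2)"
        and hCM: "\<forall>n. 1 \<le> n \<longrightarrow> cmod (C n) \<le> M * cmod (d n * D n)"
      define sq where "sq n = (cmod (C n))\<^sup>2 + (cmod (d n * D n))\<^sup>2" for n
      have sq0: "\<And>n. sq n \<ge> 0" unfolding sq_def by simp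
      have hC: "\<And>n. n \<ge> n0 \<Longrightarrow> (cmod (C n))\<^sup>2 \<le> sq n" unfolding sq_def by simp
      have hdD: "\<And>n. n \<ge> n0 \<Longrightarrow> (cmod (d n * D n))\<^sup>2 \<le> sq n" unfolding sq_def by simp
      have hD: "\<And>n. n \<ge> n0 \<Longrightarrow> (cmod (D n))\<^sup>2 \<le> (1/c1\<^sup>2) * sq n"
      proof -
        fix n assume n: "n \<ge> n0"
        have "c1 \<le> c1 * cmod (\<zeta> n)" using zeta1[OF n] const by simp
        also have "\<dots> \<le> cmod (d n)" using H3(3)[of n] n n01 by auto
        finally have "c1 * cmod (D n) \<le> cmod (d n) * cmod (D n)" by (intro mult_right_mono) auto
        then have "(c1 * cmod (D n))\<^sup>2 \<le> (cmod (d n * D n))\<^sup>2" using const by (simp add: norm_mult power_mono)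
        then have "c1\<^sup>2 * (cmod (D n))\<^sup>2 \<le> sq n" using hdD[OF n] by (simp add: power_mult_distrib)
        then show "(cmod (D n))\<^sup>2 \<le> (1/c1\<^sup>2) * sq n" using const by (simp add: field_simps)
      qed
      have hcw: "\<And>n. n \<ge> n0 \<Longrightarrow> (cmod (c n * C n))\<^sup>2 \<le> Kw * (cmod (d n * D n))\<^sup>2"
      proof -
        fix n assume n: "n \<ge> n0"
        have n1: "n \<ge> 1" using n n01 by simp
        have w: "cmod (\<omega> n) \<ge> Wb" by (rule omegaW[OF n])
        have wp: "cmod (\<omega> n) > 0" using w W unfolding Wb_def by linarith
        have "cmod (c n * C n) = cmod (c n) * cmod (C n)" by (simp add: norm_mult)
        also have "\<dots> \<le> (M / cmod (\<omega> n)) * (M * cmod (d n * D n))"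
          using H3(4)[OF n1] hCM n1 wp const by (intro mult_mono) auto
        finally have a: "cmod (c n * C n) \<le> M\<^sup>2 * cmod (d n * D n) / cmod (\<omega> n)" by (simp add: power2_eq_square)
        then have "(cmod (c n * C n))\<^sup>2 \<le> (M\<^sup>2 * cmod (d n * D n) / cmod (\<omega> n))\<^sup>2" by (intro power_mono) auto
        also have "\<dots> = M^4 * (cmod (d n * D n))\<^sup>2 / (cmod (\<omega> n))\<^sup>2" by (simp add: power_divide power_mult_distrib flip: power_mult)
        also have "\<dots> \<le> M^4 * (cmod (d n * D n))\<^sup>2 / W"
        proof (rule divide_left_mono)
          have "W \<le> Wb\<^sup>2" unfolding Wb_def using W by (simp add: power2_eq_square algebra_simps)
          also have "Wb\<^sup>2 \<le> (cmod (\<omega> n))\<^sup>2" using w W unfolding Wb_def by (intro power_mono) auto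
          finally show "W \<le> (cmod (\<omega> n))\<^sup>2" .
        qed (use W wp in auto)
        also have "\<dots> = Kw * (cmod (d n * D n))\<^sup>2" unfolding Kw_def by simp
        finally show "(cmod (c n * C n))\<^sup>2 \<le> Kw * (cmod (d n * D n))\<^sup>2" .
      qed
      have hcC: "\<And>n. n \<ge> n0 \<Longrightarrow> (cmod (c n * C n))\<^sup>2 \<le> Kw * sq n"
        using hcw hdD Kw(1) by (meson mult_left_mono order_trans)
      define Uz where "Uz = T * exp (2 * \<eta> * T) + (1 + exp (2 * \<eta> * T)) * (T/pi) / q0\<^sup>2"
      define Uw where "Uw = T * exp (2 * Hw * T) + (1 + exp (2 * Hw * T)) * (T/pi) / q0\<^sup>2"
      have Uz0: "Uz \<ge> 0" unfolding Uz_def using T0 by (simp add: add_nonneg_nonneg)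
      have Uw0: "Uw \<ge> 0" unfolding Uw_def using T0 by (simp add: add_nonneg_nonneg)
      have b1: "Qf T (u1_partial \<omega> \<zeta> r C D R p M) \<le> (12 * Uw + 12 * Uz * (1/c1\<^sup>2)) * (\<Sum>n\<in>{p..M}. sq n) + (3 * (exp (\<rho> * T))\<^sup>2 * (2 * T/pi)) * (\<Sum>n\<in>{p..M}. \<bar>R n\<bar>)\<^sup>2"
        if pn: "p \<ge> n0" for p M
        using upper_u(2)[where \<omega>=\<omega> and \<zeta>=\<zeta> and c=c and d=d and C=C and D=D and r=r and R=R and s=sq and ?n0.0=n0 and Hz=\<eta> and Hw=Hw and g=g and ?q0.0=q0 and T=T and KD="1/c1\<^sup>2" and KC=Kw and \<rho>=\<rho> and Uz=Uz and Uw=Uw and p=p and M=M, OF T0 q0 gT gz gw iz iw pn hC hD hdD hcC \<rho>(2) Uz_def Uw_def] by simp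
      have b2: "Qf T (u2_partial \<omega> \<zeta> c d C D p M) \<le> (8 * Uz + 8 * Uw * Kw) * (\<Sum>n\<in>{p..M}. sq n)"
        if pn: "p \<ge> n0" for p M
        by (rule order_trans[OF upper_u(1)[where \<omega>=\<omega> and \<zeta>=\<zeta> and c=c and d=d and C=C and D=D and r=r and s=sq and ?n0.0=n0 and Hz=\<eta> and Hw=Hw and g=g and ?q0.0=q0 and T=T and KD="1/c1\<^sup>2" and KC=Kw and \<rho>=\<rho> and Uz=Uz and Uw=Uw and p=p and M=M, OF T0 q0 gT gz gw iz iw pn hC hD hdD hcC \<rho>(2) Uz_def Uw_def] order_refl])
      have ss: "summable sq" using summ unfolding sq_def .
      have sR: "summable (\<lambda>n. \<bar>R n\<bar>)" by (rule summable_R[OF const(4) const(5) ss sq0 hR1[folded sq_def]])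
      have conv: "convergent (\<lambda>N. energy_partial \<omega> \<zeta> c d r C D R T n0 N)"
        by (rule conv_energy[OF T0 b1 b2 ss sR]) (use Uz0 Uw0 Kw const T0 in \<open>auto intro!: add_nonneg_nonneg mult_nonneg_nonneg\<close>)
      then obtain L where L: "(\<lambda>N. energy_partial \<omega> \<zeta> c d r C D R T n0 N) \<longlonglongrightarrow> L" unfolding convergent_def by blast
      have low: "cT * (\<Sum>n\<in>{n0..N}. sq n) \<le> energy_partial \<omega> \<zeta> c d r C D R T n0 N" if N: "N \<ge> n0" for N
      proof -
        have cu1: "continuous_on {0..T} (u1_partial \<omega> \<zeta> r C D R n0 N)" unfolding u1_partial_def by (intro continuous_intros)
        have cu2: "continuous_on {0..T} (u2_partial \<omega> \<zeta> c d C D n0 N)" unfolding u2_partial_def by (intro continuous_intros)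
        define A where "A = (\<Sum>n\<in>{n0..N}. (cmod (d n * D n))\<^sup>2)"
        have lT1: "Qf T1 (u2_partial \<omega> \<zeta> c d C D n0 N) \<ge> (Tm/pi) * \<delta> * A"
          unfolding A_def by (rule lower_T1[where \<omega>=\<omega> and \<zeta>=\<zeta> and c=c and d=d and C=C and D=D and ?n0.0=n0 and N=N and g=g and \<eta>=\<eta> and Hw=Hw and P=P and ?U0.0=U0 and Kw=Kw and Tm=Tm and ?T1.0=T1 and ?q0.0=q0 and \<delta>=\<delta>, OF Tm0 T1(1,2) q0 gq \<delta> gz gw iz \<eta>(1)[THEN less_imp_le] \<eta>(2) iw Hw P st U0_def hcw Kw])
        have sA: "(\<Sum>n\<in>{n0..N}. sq n) \<le> (1 + M\<^sup>2) * A"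
          unfolding A_def sum_distrib_left
        proof (rule sum_mono)
          fix n assume n: "n \<in> {n0..N}"
          have "cmod (C n) \<le> M * cmod (d n * D n)" using hCM n n01 by auto
          then have "(cmod (C n))\<^sup>2 \<le> (M * cmod (d n * D n))\<^sup>2" by (intro power_mono) auto
          then show "sq n \<le> (1 + M\<^sup>2) * (cmod (d n * D n))\<^sup>2" unfolding sq_def by (simp add: power_mult_distrib algebra_simps)
        qed
        have "cT * (\<Sum>n\<in>{n0..N}. sq n) \<le> cT * ((1 + M\<^sup>2) * A)" using sA cT0 by (intro mult_left_mono) auto
        also have "\<dots> = (T1/T) * ((Tm/pi) * \<delta> * A)" unfolding cT_def
        proof -
          have "0 \<le> M\<^sup>2" by simp
          then have m: "1 + M\<^sup>2 \<noteq> 0" by linarith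
          show "(T1/T) * ((Tm/pi) * \<delta> / (1 + M\<^sup>2)) * ((1 + M\<^sup>2) * A) = (T1/T) * ((Tm/pi) * \<delta> * A)"
            using m by simp
        qed
        also have "\<dots> \<le> (T1/T) * Qf T1 (u2_partial \<omega> \<zeta> c d C D n0 N)" using lT1 T1 T0 by (intro mult_left_mono) auto
        also have "\<dots> \<le> Qf T (u2_partial \<omega> \<zeta> c d C D n0 N)" by (rule Q_mono_T[OF T1(3,4) cu2])
        also have "\<dots> \<le> energy_partial \<omega> \<zeta> c d r C D R T n0 N"
          using energy_eq[OF T0] Q_nonneg[OF T0 cu1] by simp
        finally show ?thesis .
      qed
      have "cT * (\<Sum>n. sq (n + n0)) \<le> L"
      proof (rule LIMSEQ_le[OF _ L])
        show "(\<lambda>N. cT * (\<Sum>n\<in>{n0..N}. sq n)) \<longlonglongrightarrow> cT * (\<Sum>n. sq (n + n0))"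
          by (intro tendsto_mult_left psum_lim ss)
        show "\<exists>N. \<forall>n\<ge>N. cT * (\<Sum>n\<in>{n0..n}. sq n) \<le> energy_partial \<omega> \<zeta> c d r C D R T n0 n"
          using low by blast
      qed
      then show "\<exists>L. (\<lambda>N. energy_partial \<omega> \<zeta> c d r C D R T n0 N) \<longlonglongrightarrow> L \<and>
                        cT * (\<Sum>n. (cmod (C (n + n0)))\<^sup>2 + (cmod (d (n + n0) * D (n + n0)))\<^sup>2) \<le> L"
        using L unfolding sq_def by blast
    qed
  qed
qed


end
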